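(* Let $\delta(n)=o(n)$. For every $\delta(n)$-random labeled graph $G$ on $n$ nodes, without relabeling (model $\alpha$; this holds even if nodes know their neighbours and ports may be reassigned), in every full-information shortest path routing scheme on $G$ the local routing function at every node occupies at least $n^2/4-o(n^2)$ bits; hence the complete scheme requires at least $n^3/4-o(n^3)$ bits.
   Context: $C(x\mid y)$ is Kolmogorov complexity w.r.t. a fixed universal Turing machine; $\log$ is base 2. A labeled graph $G$ on $V=\{1,\dots,n\}$ is encoded by $E(G)\in\{0,1\}^{n(n-1)/2}$ (bit $i$ indicates the $i$-th possible edge in lexicographic order); with $\mathcal G$ the set of all labeled graphs on $V$, $G$ is $\delta(n)$-random if $C(E(G)\mid n,\delta,\mathcal G)\ge n(n-1)/2-\delta(n)$. A full-information shortest path routing scheme has at each node $u$ a local routing function that, for each destination $v\ne u$, returns the set of all edges at $u$ lying on some shortest path from $u$ to $v$. Model $\alpha$: nodes keep their labels $1,\dots,n$. *)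

theory Defs
  imports Main "HOL-Library.Landau_Symbols"
begin

datatype recf = Z | S | Id nat | Cn recf "recf list" | Pr recf recf | Mn recf

text \<open>Big-step semantics (deterministic); unused extra arguments are ignored.\<close>
inductive eval :: "recf \<Rightarrow> nat list \<Rightarrow> nat \<Rightarrow> bool" where
  ev_Z: "eval Z xs 0"
| ev_S: "eval S (x # xs) (Suc x)"
| ev_Id: "i < length xs \<Longrightarrow> eval (Id i) xs (xs ! i)"
| ev_Cn: "list_all2 (\<lambda>g y. eval g xs y) gs ys \<Longrightarrow> eval f ys z \<Longrightarrow> eval (Cn f gs) xs z"
| ev_Pr0: "eval g xs y \<Longrightarrow> eval (Pr g h) (0 # xs) y"
| ev_PrS: "eval (Pr g h) (k # xs) y \<Longrightarrow> eval h (y # k # xs) z \<Longrightarrow> eval (Pr g h) (Suc k # xs) z"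
| ev_Mn: "eval f (k # xs) 0 \<Longrightarrow> (\<forall>j<k. \<exists>y. eval f (j # xs) (Suc y)) \<Longrightarrow> eval (Mn f) xs k"
monos list.rel_mono

text \<open>Bijective base-2 numbering of binary strings.\<close>
definition bcode :: "bool list \<Rightarrow> nat" where
  "bcode xs = foldr (\<lambda>b m. 2 * m + 1 + (if b then 1 else 0)) xs 0"

definition partrec2 :: "(bool list \<Rightarrow> bool list \<Rightarrow> bool list option) \<Rightarrow> bool" where
  "partrec2 \<phi> \<longleftrightarrow> (\<exists>f. \<forall>p y z. \<phi> p y = Some z \<longleftrightarrow> eval f [bcode p, bcode y] (bcode z))"

definition universal :: "(bool list \<Rightarrow> bool list \<Rightarrow> bool list option) \<Rightarrow> bool" where
  "universal U \<longleftrightarrow> partrec2 U \<and>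
     (\<forall>\<phi>. partrec2 \<phi> \<longrightarrow> (\<exists>c. \<forall>p y x. \<phi> p y = Some x \<longrightarrow>
         (\<exists>q. U q y = Some x \<and> length q \<le> length p + c)))"

definition KC :: "(bool list \<Rightarrow> bool list \<Rightarrow> bool list option) \<Rightarrow> bool list \<Rightarrow> bool list \<Rightarrow> nat" where
  "KC U x y = (LEAST m. \<exists>p. length p = m \<and> U p y = Some x)"

text \<open>Self-delimiting encoding of a tuple of strings as one string; unary numbers.\<close>
definition tuple_enc :: "bool list list \<Rightarrow> bool list" where
  "tuple_enc xss = concat (map (\<lambda>xs. concat (map (\<lambda>b. [True, b]) xs) @ [False, False]) xss)"

definition unary :: "nat \<Rightarrow> bool list" where
  "unary n = replicate n True"

text \<open>A labeled graph is its set of edges, each edge (i,j) stored with i < j.\<close>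
type_synonym graph = "(nat \<times> nat) set"

definition labeled_graph :: "nat \<Rightarrow> graph \<Rightarrow> bool" where
  "labeled_graph n G \<longleftrightarrow> G \<subseteq> {(i, j). 1 \<le> i \<and> i < j \<and> j \<le> n}"

definition pairs_lex :: "nat \<Rightarrow> (nat \<times> nat) list" where
  "pairs_lex n = concat (map (\<lambda>i. map (\<lambda>j. (i, j)) [i+1..<n+1]) [1..<n+1])"

definition E :: "nat \<Rightarrow> graph \<Rightarrow> bool list" where
  "E n G = map (\<lambda>e. e \<in> G) (pairs_lex n)"

definition adj :: "graph \<Rightarrow> nat \<Rightarrow> nat \<Rightarrow> bool" where
  "adj G u v \<longleftrightarrow> (u, v) \<in> G \<or> (v, u) \<in> G"

definition nbrs :: "graph \<Rightarrow> nat \<Rightarrow> nat set" where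
  "nbrs G u = {w. adj G u w}"

definition random_graph :: "(bool list \<Rightarrow> bool list \<Rightarrow> bool list option) \<Rightarrow> (nat \<Rightarrow> real) \<Rightarrow> nat \<Rightarrow> graph \<Rightarrow> bool" where
  "random_graph U \<delta> n G \<longleftrightarrow> labeled_graph n G \<and>
     real (KC U (E n G) (unary n)) \<ge> real (n * (n - 1) div 2) - \<delta> n"

definition adjrel :: "graph \<Rightarrow> (nat \<times> nat) set" where
  "adjrel G = {(u, v). adj G u v}"

text \<open>The edge uw lies on some shortest path from u to v: there is a walk of length k+1
  from u to v starting with uw, and no walk from u to v of length at most k.\<close>
definition on_shortest_path :: "graph \<Rightarrow> nat \<Rightarrow> nat \<Rightarrow> nat \<Rightarrow> bool" where
  "on_shortest_path G u v w \<longleftrightarrow> adj G u w \<and>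
     (\<exists>k. (w, v) \<in> adjrel G ^^ k \<and> (\<forall>j\<le>k. (u, v) \<notin> adjrel G ^^ j))"

text \<open>R u v is the set of edges at u (each edge uw represented by the label w of its other
  endpoint) lying on some shortest path from u to v.\<close>
definition full_info_sp_scheme :: "nat \<Rightarrow> graph \<Rightarrow> (nat \<Rightarrow> nat \<Rightarrow> nat set) \<Rightarrow> bool" where
  "full_info_sp_scheme n G R \<longleftrightarrow>
     (\<forall>u\<in>{1..n}. \<forall>v\<in>{1..n}. v \<noteq> u \<longrightarrow> R u v = {w. on_shortest_path G u v w})"

definition rt_table :: "nat \<Rightarrow> (nat \<Rightarrow> nat \<Rightarrow> nat set) \<Rightarrow> nat \<Rightarrow> bool list" where
  "rt_table n R u = concat (map (\<lambda>v. map (\<lambda>w. w \<in> R u v) [1..<n+1]) (filter (\<lambda>v. v \<noteq> u) [1..<n+1]))"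

text \<open>Table of the local routing function at u when the edges at u are named by
  ports 0..d-1 via the port assignment pi (d = degree of u).\<close>
definition port_table :: "nat \<Rightarrow> (nat \<Rightarrow> nat \<Rightarrow> nat set) \<Rightarrow> nat \<Rightarrow> nat \<Rightarrow> (nat \<Rightarrow> nat) \<Rightarrow> bool list" where
  "port_table n R u d \<pi> = concat (map (\<lambda>v. map (\<lambda>i. \<pi> i \<in> R u v) [0..<d]) (filter (\<lambda>v. v \<noteq> u) [1..<n+1]))"

text \<open>What node u knows for free: n, its own label, and its neighbours.\<close>
definition node_info :: "nat \<Rightarrow> graph \<Rightarrow> nat \<Rightarrow> bool list" where
  "node_info n G u = tuple_enc [unary n, unary u, map (\<lambda>w. adj G u w) [1..<n+1]]"

end

theory Submission
  imports Defs "HOL-Probability.Hoeffding" "HOL-Real_Asymp.Real_Asymp"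
begin

section \<open>Computability framework\<close>

definition pc :: "nat \<Rightarrow> (nat list \<Rightarrow> nat) \<Rightarrow> bool" where
  "pc k f \<longleftrightarrow> (\<exists>r. \<forall>xs. length xs = k \<longrightarrow> eval r xs (f xs))"

definition pcL :: "nat \<Rightarrow> nat \<Rightarrow> (nat list \<Rightarrow> nat list) \<Rightarrow> bool" where
  "pcL k m Ev \<longleftrightarrow> (\<exists>rs. length rs = m \<and> (\<forall>xs. length xs = k \<longrightarrow>
      list_all2 (\<lambda>r y. eval r xs y) rs (Ev xs)))"

lemma pc_cong: "pc k f \<Longrightarrow> (\<And>xs. length xs = k \<Longrightarrow> f xs = g xs) \<Longrightarrow> pc k g"
  unfolding pc_def by auto

lemma pc_proj: "i < k \<Longrightarrow> pc k (\<lambda>xs. xs ! i)"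
  unfolding pc_def by (rule exI[of _ "Id i"]) (auto intro: eval.intros)

fun constr :: "nat \<Rightarrow> recf" where
  "constr 0 = Z" | "constr (Suc c) = Cn S [constr c]"

lemma eval_constr: "eval (constr c) xs c"
  by (induction c) (auto intro!: eval.intros)

lemma pc_const: "pc k (\<lambda>xs. c)"
  unfolding pc_def by (rule exI[of _ "constr c"]) (auto intro: eval_constr)

lemma pc_Suc: "pc k f \<Longrightarrow> pc k (\<lambda>xs. Suc (f xs))"
  unfolding pc_def
proof (elim exE)
  fix r assume r: "\<forall>xs. length xs = k \<longrightarrow> eval r xs (f xs)"
  show "\<exists>r. \<forall>xs. length xs = k \<longrightarrow> eval r xs (Suc (f xs))"
    by (rule exI[of _ "Cn S [r]"]) (auto intro!: ev_Cn[where ys="[_]"] ev_S r[rule_format])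
qed

lemma pc_subst: "pc m F \<Longrightarrow> pcL k m Ev \<Longrightarrow> pc k (\<lambda>xs. F (Ev xs))"
  unfolding pc_def pcL_def
proof (elim exE conjE)
  fix r rs
  assume r: "\<forall>xs. length xs = m \<longrightarrow> eval r xs (F xs)"
    and rs: "length rs = m" "\<forall>xs. length xs = k \<longrightarrow> list_all2 (\<lambda>r y. eval r xs y) rs (Ev xs)"
  show "\<exists>r. \<forall>xs. length xs = k \<longrightarrow> eval r xs (F (Ev xs))"
  proof (rule exI[of _ "Cn r rs"], intro allI impI)
    fix xs :: "nat list" assume "length xs = k"
    with rs have l: "list_all2 (\<lambda>r y. eval r xs y) rs (Ev xs)" by auto
    hence "length (Ev xs) = m" using rs(1) list_all2_lengthD by fastforce
    with r l show "eval (Cn r rs) xs (F (Ev xs))" by (auto intro: ev_Cn)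
  qed
qed

lemma pcL_Nil: "pcL k 0 (\<lambda>xs. [])"
  unfolding pcL_def by auto

lemma pcL_Cons: "pc k f \<Longrightarrow> pcL k m Ev \<Longrightarrow> pcL k (Suc m) (\<lambda>xs. f xs # Ev xs)"
  unfolding pcL_def pc_def
proof (elim exE conjE)
  fix r rs assume r: "\<forall>xs. length xs = k \<longrightarrow> eval r xs (f xs)"
    and rs: "length rs = m" "\<forall>xs. length xs = k \<longrightarrow> list_all2 (\<lambda>r y. eval r xs y) rs (Ev xs)"
  show "\<exists>rs. length rs = Suc m \<and> (\<forall>xs. length xs = k \<longrightarrow> list_all2 (\<lambda>r y. eval r xs y) rs (f xs # Ev xs))"
    by (rule exI[of _ "r # rs"]) (use r rs in auto)
qed

lemma pcL_drop: "pcL k (k - m) (\<lambda>xs. drop m xs)"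
  unfolding pcL_def
  by (rule exI[of _ "map Id [m..<k]"]) (auto simp: list_all2_conv_all_nth intro: ev_Id)

primrec PR :: "nat \<Rightarrow> (nat \<Rightarrow> nat \<Rightarrow> nat) \<Rightarrow> nat \<Rightarrow> nat" where
  "PR b h 0 = b" | "PR b h (Suc n) = h (PR b h n) n"

lemma pc_PR0:
  assumes "pc k g" "pc (Suc (Suc k)) H"
  shows "pc (Suc k) (\<lambda>xs. PR (g (tl xs)) (\<lambda>a i. H (a # i # tl xs)) (hd xs))"
proof -
  obtain rg where rg: "\<forall>xs. length xs = k \<longrightarrow> eval rg xs (g xs)" using assms(1) pc_def by auto
  obtain rH where rH: "\<forall>xs. length xs = Suc (Suc k) \<longrightarrow> eval rH xs (H xs)" using assms(2) pc_def by auto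
  have *: "eval (Pr rg rH) (n # ys) (PR (g ys) (\<lambda>a i. H (a # i # ys)) n)" if "length ys = k" for n ys
    using that
  proof (induction n)
    case 0 then show ?case by (auto intro: ev_Pr0 rg[rule_format])
  next
    case (Suc n) then show ?case by (auto intro!: ev_PrS rH[rule_format])
  qed
  show ?thesis unfolding pc_def
    by (rule exI[of _ "Pr rg rH"]) (auto simp: length_Suc_conv intro: *)
qed

lemma pc_PR:
  assumes "pc k g" "pc (Suc (Suc k)) (\<lambda>ys. h (ys!0) (ys!1) (drop 2 ys))" "pc k nf"
  shows "pc k (\<lambda>xs. PR (g xs) (\<lambda>a i. h a i xs) (nf xs))"
proof -
  have "pc k (\<lambda>xs. (\<lambda>zs. PR (g (tl zs)) (\<lambda>a i. (\<lambda>ys. h (ys!0) (ys!1) (drop 2 ys)) (a # i # tl zs)) (hd zs)) (nf xs # xs))"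
    by (rule pc_subst[OF pc_PR0[OF assms(1,2)]])
       (use pcL_Cons[OF assms(3) pcL_drop[of k 0]] in simp)
  thus ?thesis by simp
qed

lemma pc_comp1: "pc 1 (\<lambda>ys. F (ys!0)) \<Longrightarrow> pc k a \<Longrightarrow> pc k (\<lambda>xs. F (a xs))"
  using pc_subst[of 1 "\<lambda>ys. F (ys!0)" k "\<lambda>xs. [a xs]"] pcL_Cons[OF _ pcL_Nil] by simp

lemma pc_comp2: "pc 2 (\<lambda>ys. F (ys!0) (ys!1)) \<Longrightarrow> pc k a \<Longrightarrow> pc k b \<Longrightarrow> pc k (\<lambda>xs. F (a xs) (b xs))"
  using pc_subst[of 2 "\<lambda>ys. F (ys!0) (ys!1)" k "\<lambda>xs. [a xs, b xs]"] pcL_Cons[OF _ pcL_Cons[OF _ pcL_Nil]]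
  by (simp add: numeral_2_eq_2)

lemma pc_comp3: "pc 3 (\<lambda>ys. F (ys!0) (ys!1) (ys!2)) \<Longrightarrow> pc k a \<Longrightarrow> pc k b \<Longrightarrow> pc k c \<Longrightarrow>
   pc k (\<lambda>xs. F (a xs) (b xs) (c xs))"
  using pc_subst[of 3 "\<lambda>ys. F (ys!0) (ys!1) (ys!2)" k "\<lambda>xs. [a xs, b xs, c xs]"]
    pcL_Cons[OF _ pcL_Cons[OF _ pcL_Cons[OF _ pcL_Nil]]]
  by (simp add: numeral_3_eq_3)

lemma pc_g1:
  assumes "pc (Suc k) (\<lambda>ys. g (ys!0) (drop 1 ys))" "pc k' A" "pcL k' k Ev"
  shows "pc k' (\<lambda>zs. g (A zs) (Ev zs))"
  using pc_subst[OF assms(1) pcL_Cons[OF assms(2,3)]] by simp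

lemma pc_g2:
  assumes "pc (Suc (Suc k)) (\<lambda>ys. g (ys!0) (ys!1) (drop 2 ys))" "pc k' A" "pc k' B" "pcL k' k Ev"
  shows "pc k' (\<lambda>zs. g (A zs) (B zs) (Ev zs))"
  using pc_subst[OF assms(1) pcL_Cons[OF assms(2) pcL_Cons[OF assms(3,4)]]] by simp

lemma pc_drop1: "m + i < k \<Longrightarrow> pc k (\<lambda>ys. drop m ys ! i)"
  by (rule pc_cong[OF pc_proj[of "m+i" k]]) auto
lemma pc_drop2: "m + m' + i < k \<Longrightarrow> pc k (\<lambda>ys. drop m (drop m' ys) ! i)"
  by (rule pc_cong[OF pc_proj[of "m'+m+i" k]]) (auto simp: add.commute add.left_commute)
lemma pc_drop3: "m + m' + m'' + i < k \<Longrightarrow> pc k (\<lambda>ys. drop m (drop m' (drop m'' ys)) ! i)"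
  by (rule pc_cong[OF pc_proj[of "m''+m'+m+i" k]]) (auto simp: add.commute add.left_commute)

lemma pc_weak: "pc k f \<Longrightarrow> m + k \<le> k' \<Longrightarrow> k' - m = k \<Longrightarrow> pc k' (\<lambda>ys. f (drop m ys))"
  using pc_subst[OF _ pcL_drop[of k' m], of f] by simp

lemma eval_det: "eval f xs y \<Longrightarrow> eval f xs y' \<Longrightarrow> y = y'"
proof (induction arbitrary: y' rule: eval.induct)
  case (ev_Z xs) from ev_Z.prems show ?case by (cases rule: eval.cases) auto
next
  case (ev_S x xs) from ev_S.prems show ?case by (cases rule: eval.cases) auto
next
  case (ev_Id i xs) from ev_Id.prems show ?case by (cases rule: eval.cases) auto
next
  case (ev_Cn xs gs ys f z)
  from ev_Cn.prems obtain ys' where ys': "list_all2 (\<lambda>g y. eval g xs y) gs ys'" "eval f ys' y'"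
    by (cases rule: eval.cases) auto
  have "ys = ys'" using ev_Cn(1) ys'(1)
    by (induction gs ys arbitrary: ys' rule: list_all2_induct)
       (auto simp: list_all2_Cons1)
  with ev_Cn ys' show ?case by auto
next
  case (ev_Pr0 g xs y h)
  from ev_Pr0.prems show ?case by (cases rule: eval.cases) (use ev_Pr0 in auto)
next
  case (ev_PrS g h k xs y z)
  from ev_PrS.prems show ?case
    by (cases rule: eval.cases) (use ev_PrS in auto)
next
  case (ev_Mn f k xs)
  from ev_Mn.prems obtain k' where k': "y' = k'" "eval f (k' # xs) 0" "\<forall>j<k'. \<exists>y. eval f (j # xs) (Suc y)"
    by (cases rule: eval.cases) auto
  show ?case
  proof (rule ccontr)
    assume "k \<noteq> y'"
    then consider "k < k'" | "k' < k" using k' by linarith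
    then show False
    proof cases
      case 1 then obtain y where "eval f (k # xs) (Suc y)" using k' by auto
      with ev_Mn.IH(1) show False by fastforce
    next
      case 2 then obtain y where "eval f (k' # xs) (Suc y)" "\<forall>y''. eval f (k' # xs) y'' \<longrightarrow> Suc y = y''"
        using ev_Mn.IH(2) by blast
      with k' show False by fastforce
    qed
  qed
qed

lemma bcode_Nil[simp]: "bcode [] = 0" by (simp add: bcode_def)
lemma bcode_Cons[simp]: "bcode (b # xs) = 2 * bcode xs + 1 + (if b then 1 else 0)"
  by (simp add: bcode_def)

fun bdec :: "nat \<Rightarrow> bool list" where
  "bdec x = (if x = 0 then [] else ((x - 1) mod 2 = 1) # bdec ((x - 1) div 2))"
declare bdec.simps[simp del]

lemma bcode_bdec[simp]: "bcode (bdec x) = x"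
proof (induction x rule: bdec.induct)
  case (1 x)
  show ?case
  proof (cases "x = 0")
    case False
    have "bcode (bdec x) = 2 * ((x - 1) div 2) + 1 + (if (x - 1) mod 2 = 1 then 1 else 0)"
      using 1 False by (subst bdec.simps) simp
    also have "\<dots> = x" using False by presburger
    finally show ?thesis .
  qed (subst bdec.simps, simp)
qed

lemma bdec_bcode[simp]: "bdec (bcode xs) = xs"
proof (induction xs)
  case Nil then show ?case by (subst bdec.simps) auto
next
  case (Cons a xs) then show ?case by (subst bdec.simps) auto
qed

lemma bcode_inj: "bcode xs = bcode ys \<Longrightarrow> xs = ys"
  by (metis bdec_bcode)

definition phiR :: "recf \<Rightarrow> bool list \<Rightarrow> bool list \<Rightarrow> bool list option" where
  "phiR F p y = (if \<exists>z. eval F [bcode p, bcode y] z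
     then Some (bdec (THE z. eval F [bcode p, bcode y] z)) else None)"

lemma partrec2_phiR: "partrec2 (phiR F)"
  unfolding partrec2_def
proof (rule exI[of _ F], intro allI)
  fix p y z
  show "phiR F p y = Some z \<longleftrightarrow> eval F [bcode p, bcode y] (bcode z)"
  proof
    assume "phiR F p y = Some z"
    then obtain z0 where z0: "eval F [bcode p, bcode y] z0" and "z = bdec (THE z. eval F [bcode p, bcode y] z)"
      unfolding phiR_def by (auto split: if_splits)
    moreover have "(THE z. eval F [bcode p, bcode y] z) = z0" using z0 eval_det by blast
    ultimately show "eval F [bcode p, bcode y] (bcode z)" by simp
  next
    assume a: "eval F [bcode p, bcode y] (bcode z)"
    have "(THE z'. eval F [bcode p, bcode y] z') = bcode z" using a eval_det by blast
    thus "phiR F p y = Some z" using a unfolding phiR_def by auto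
  qed
qed

lemma phiR_eval: assumes "eval F [bcode p, bcode y] (bcode x)" shows "phiR F p y = Some x"
proof -
  have "(THE z. eval F [bcode p, bcode y] z) = bcode x" using assms eval_det by blast
  thus ?thesis using assms by (auto simp: phiR_def)
qed

named_theorems pci

declare pc_proj[pci] pc_const[pci] pc_Suc[pci] pc_drop1[pci] pc_drop2[pci] pc_drop3[pci]

lemma add_PR: "PR a (\<lambda>acc i. Suc acc) b = a + b" by (induction b) auto
lemma pc_add[pci]: "pc k a \<Longrightarrow> pc k b \<Longrightarrow> pc k (\<lambda>xs. a xs + b xs)"
proof (rule pc_comp2[where F="\<lambda>u v. u + v"])
  have "pc 2 (\<lambda>ys. PR (ys!0) (\<lambda>acc i. Suc acc) (ys!1))" by (intro pc_PR pci) auto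
  thus "pc 2 (\<lambda>ys. ys!0 + ys!1)" by (simp only: add_PR)
qed

lemma pred_PR: "PR 0 (\<lambda>acc i. i) b = b - 1" by (induction b) auto
lemma pc_pred[pci]: "pc k a \<Longrightarrow> pc k (\<lambda>xs. a xs - 1)"
proof (rule pc_comp1[where F="\<lambda>u. u - 1"])
  have "pc 1 (\<lambda>ys. PR 0 (\<lambda>acc i. i) (ys!0))" by (intro pc_PR pci) auto
  thus "pc 1 (\<lambda>ys. ys!0 - 1)" by (simp only: pred_PR)
qed

lemma sub_PR: "PR a (\<lambda>acc i. acc - 1) b = a - b" by (induction b) auto
lemma pc_sub[pci]: "pc k a \<Longrightarrow> pc k b \<Longrightarrow> pc k (\<lambda>xs. a xs - b xs)"
proof (rule pc_comp2[where F="\<lambda>u v. u - v"])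
  have "pc 2 (\<lambda>ys. PR (ys!0) (\<lambda>acc i. acc - 1) (ys!1))" by (intro pc_PR pci) auto
  thus "pc 2 (\<lambda>ys. ys!0 - ys!1)" by (simp only: sub_PR)
qed

lemma mult_PR: "PR 0 (\<lambda>acc i. acc + a) b = a * b" by (induction b) auto
lemma pc_mult[pci]: "pc k a \<Longrightarrow> pc k b \<Longrightarrow> pc k (\<lambda>xs. a xs * b xs)"
proof (rule pc_comp2[where F="\<lambda>u v. u * v"])
  have "pc 2 (\<lambda>ys. PR 0 (\<lambda>acc i. acc + ys!0) (ys!1))" by (intro pc_PR pci) auto
  thus "pc 2 (\<lambda>ys. ys!0 * ys!1)" by (simp only: mult_PR)
qed

lemma pow_PR: "PR 1 (\<lambda>acc i. acc * a) b = a ^ b" by (induction b) auto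
lemma pc_pow[pci]: "pc k a \<Longrightarrow> pc k b \<Longrightarrow> pc k (\<lambda>xs. a xs ^ b xs)"
proof (rule pc_comp2[where F="\<lambda>u v. u ^ v"])
  have "pc 2 (\<lambda>ys. PR 1 (\<lambda>acc i. acc * ys!0) (ys!1))" by (intro pc_PR pci) auto
  thus "pc 2 (\<lambda>ys. ys!0 ^ ys!1)" by (simp only: pow_PR)
qed

lemma mod2_PR: "PR 0 (\<lambda>acc i. 1 - acc) b = b mod 2"
proof (induction b)
  case (Suc b) then show ?case by simp presburger
qed simp
lemma pc_mod2[pci]: "pc k a \<Longrightarrow> pc k (\<lambda>xs. a xs mod 2)"
proof (rule pc_comp1[where F="\<lambda>u. u mod 2"])
  have "pc 1 (\<lambda>ys. PR 0 (\<lambda>acc i. 1 - acc) (ys!0))" by (intro pc_PR pci) auto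
  thus "pc 1 (\<lambda>ys. ys!0 mod 2)" by (simp only: mod2_PR)
qed

lemma div2_PR: "PR 0 (\<lambda>acc i. acc + i mod 2) b = b div 2"
proof (induction b)
  case (Suc b) then show ?case by simp presburger
qed simp
lemma pc_div2[pci]: "pc k a \<Longrightarrow> pc k (\<lambda>xs. a xs div 2)"
proof (rule pc_comp1[where F="\<lambda>u. u div 2"])
  have "pc 1 (\<lambda>ys. PR 0 (\<lambda>acc i. acc + i mod 2) (ys!0))" by (intro pc_PR pci) auto
  thus "pc 1 (\<lambda>ys. ys!0 div 2)" by (simp only: div2_PR)
qed

definition pcP :: "nat \<Rightarrow> (nat list \<Rightarrow> bool) \<Rightarrow> bool" where
  "pcP k P \<longleftrightarrow> pc k (\<lambda>xs. if P xs then 1 else 0)"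

lemma if_PR: "PR b (\<lambda>acc i. a) (if P then 1 else 0) = (if P then a else b)" by auto
lemma pc_If[pci]: "pcP k P \<Longrightarrow> pc k a \<Longrightarrow> pc k b \<Longrightarrow> pc k (\<lambda>xs. if P xs then a xs else b xs)"
proof -
  assume "pcP k P" "pc k a" "pc k b"
  have "pc k (\<lambda>xs. PR (b xs) (\<lambda>acc i. a xs) (if P xs then 1 else 0))"
    by (rule pc_PR) (use \<open>pcP k P\<close> \<open>pc k a\<close> \<open>pc k b\<close> in \<open>auto simp: pcP_def intro: pc_weak\<close>)
  thus ?thesis by (simp add: if_PR)
qed

lemma pcP_const[pci]: "pcP k (\<lambda>xs. b)"
  unfolding pcP_def by (rule pc_const)

lemma pcP_eq[pci]: "pc k a \<Longrightarrow> pc k b \<Longrightarrow> pcP k (\<lambda>xs. a xs = b xs)"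
  unfolding pcP_def
  by (rule pc_cong[where f="\<lambda>xs. 1 - ((a xs - b xs) + (b xs - a xs))"]) (intro pci, assumption, assumption, auto)

lemma pcP_less[pci]: "pc k a \<Longrightarrow> pc k b \<Longrightarrow> pcP k (\<lambda>xs. a xs < b xs)"
  unfolding pcP_def
  by (rule pc_cong[where f="\<lambda>xs. 1 - (1 - (b xs - a xs))"]) (intro pci, assumption, assumption, auto)

lemma pcP_le[pci]: "pc k a \<Longrightarrow> pc k b \<Longrightarrow> pcP k (\<lambda>xs. a xs \<le> b xs)"
  unfolding pcP_def
  by (rule pc_cong[where f="\<lambda>xs. 1 - (1 - (Suc (b xs) - a xs))"]) (intro pci, assumption, assumption, auto)

lemma pcP_not[pci]: "pcP k P \<Longrightarrow> pcP k (\<lambda>xs. \<not> P xs)"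
  unfolding pcP_def
  by (rule pc_cong[OF pc_sub[OF pc_const[of k 1]], of "\<lambda>xs. if P xs then 1 else 0"]) auto

lemma pcP_conj[pci]: "pcP k P \<Longrightarrow> pcP k Q \<Longrightarrow> pcP k (\<lambda>xs. P xs \<and> Q xs)"
  unfolding pcP_def
  by (rule pc_cong[OF pc_mult[of k "\<lambda>xs. if P xs then 1 else 0" "\<lambda>xs. if Q xs then 1 else 0"]]) auto

lemma pcP_disj[pci]: "pcP k P \<Longrightarrow> pcP k Q \<Longrightarrow> pcP k (\<lambda>xs. P xs \<or> Q xs)"
  unfolding pcP_def
  by (rule pc_cong[OF pc_sub[OF pc_const[of k 1] pc_sub[OF pc_const[of k 1] pc_add[of k "\<lambda>xs. if P xs then 1 else 0" "\<lambda>xs. if Q xs then 1 else 0"]]]]) auto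

lemma pcL_drop': "k' = m + k \<Longrightarrow> pcL k' k (\<lambda>xs. drop m xs)"
  using pcL_drop[of k' m] by simp

lemma pc_wk1: "pc k B \<Longrightarrow> pc (Suc k) (\<lambda>ys. B (drop 1 ys))"
  by (rule pc_subst[OF _ pcL_drop']) auto
lemma pc_wk2: "pc k B \<Longrightarrow> pc (Suc (Suc k)) (\<lambda>ys. B (drop 2 ys))"
  by (rule pc_subst[OF _ pcL_drop']) auto

lemma pcP_g1:
  assumes "pcP (Suc k) (\<lambda>ys. P (ys!0) (drop 1 ys))" "pc k' A" "pcL k' k Ev"
  shows "pcP k' (\<lambda>zs. P (A zs) (Ev zs))"
  using assms unfolding pcP_def
  using pc_g1[where g="\<lambda>a b. if P a b then 1 else 0"] by blast

definition tlc :: "nat \<Rightarrow> nat" where "tlc x = (x - 1) div 2"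
definition hdc :: "nat \<Rightarrow> nat" where "hdc x = (x - 1) mod 2"

lemma pc_tlc[pci]: assumes "pc k a" shows "pc k (\<lambda>xs. tlc (a xs))"
  unfolding tlc_def by (intro pci assms)
lemma pc_hdc[pci]: assumes "pc k a" shows "pc k (\<lambda>xs. hdc (a xs))"
  unfolding hdc_def by (intro pci assms)

lemma bcode_eq_0[simp]: "bcode xs = 0 \<longleftrightarrow> xs = []"
  by (cases xs) auto

lemma tlc_bcode[simp]: "tlc (bcode xs) = bcode (tl xs)"
  by (cases xs) (auto simp: tlc_def)
lemma hdc_bcode[simp]: "hdc (bcode (b # xs)) = (if b then 1 else 0)"
  by (auto simp: hdc_def)

definition dropc :: "nat \<Rightarrow> nat \<Rightarrow> nat" where "dropc k x = PR x (\<lambda>a i. tlc a) k"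

lemma pc_dropc[pci]: assumes "pc k a" "pc k b" shows "pc k (\<lambda>xs. dropc (a xs) (b xs))"
  unfolding dropc_def by (intro pc_PR pci assms | simp)+

lemma dropc_bcode[simp]: "dropc k (bcode xs) = bcode (drop k xs)"
  by (induction k) (auto simp: dropc_def drop_Suc tl_drop)

definition nthc :: "nat \<Rightarrow> nat \<Rightarrow> nat" where "nthc x k = hdc (dropc k x)"

lemma pc_nthc[pci]: assumes "pc k a" "pc k b" shows "pc k (\<lambda>xs. nthc (a xs) (b xs))"
  unfolding nthc_def by (intro pci assms)

lemma nthc_bcode[simp]: "k < length xs \<Longrightarrow> nthc (bcode xs) k = (if xs ! k then 1 else 0)"
  by (simp add: nthc_def hdc_def Cons_nth_drop_Suc[symmetric])

definition lenc :: "nat \<Rightarrow> nat" where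
  "lenc x = PR 0 (\<lambda>a i. if dropc i x = 0 then a else Suc a) x"

lemma pc_lenc[pci]: assumes "pc k a" shows "pc k (\<lambda>xs. lenc (a xs))"
  unfolding lenc_def by (intro pc_PR pci assms pc_wk2[OF assms] | simp)+

lemma length_le_bcode: "length xs \<le> bcode xs"
  by (induction xs) auto

lemma lenc_bcode[simp]: "lenc (bcode xs) = length xs"
proof -
  have "PR 0 (\<lambda>a i. if dropc i (bcode xs) = 0 then a else Suc a) m = min m (length xs)" for m
    by (induction m) auto
  thus ?thesis using length_le_bcode[of xs] by (simp add: lenc_def min_absorb2)
qed

definition sumc :: "(nat \<Rightarrow> nat) \<Rightarrow> nat \<Rightarrow> nat" where
  "sumc f N = PR 0 (\<lambda>a i. a + f i) N"

lemma sumc_eq: "sumc f N = (\<Sum>i<N. f i)"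
  by (induction N) (auto simp: sumc_def)

lemma pc_sumc[pci]:
  assumes "pc (Suc k) (\<lambda>ys. f (ys!0) (drop 1 ys))" "pc k N"
  shows "pc k (\<lambda>xs. sumc (\<lambda>i. f i xs) (N xs))"
  unfolding sumc_def
  by (intro pc_PR pci assms pc_g1[OF assms(1)] pcL_drop' | simp)+

definition build :: "(nat \<Rightarrow> nat) \<Rightarrow> nat \<Rightarrow> nat" where
  "build f N = sumc (\<lambda>i. 2 ^ i * Suc (f i)) N"

lemma pc_build[pci]:
  assumes "pc (Suc k) (\<lambda>ys. f (ys!0) (drop 1 ys))" "pc k N"
  shows "pc k (\<lambda>xs. build (\<lambda>i. f i xs) (N xs))"
  unfolding build_def
  by (intro pci assms pc_g1[OF assms(1)] pcL_drop' | simp)+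

lemma bcode_append: "bcode (xs @ ys) = bcode xs + 2 ^ length xs * bcode ys"
  by (induction xs) auto

lemma build_Suc: "build f (Suc N) = build f N + 2 ^ N * Suc (f N)"
  by (simp add: build_def sumc_def)

lemma build_cong: "(\<And>i. i < N \<Longrightarrow> f i = g i) \<Longrightarrow> build f N = build g N"
  by (simp add: build_def sumc_eq)

lemma bcode_build: "bcode xs = build (\<lambda>i. if xs ! i then 1 else 0) (length xs)"
proof (induction xs rule: rev_induct)
  case (snoc x xs)
  have "build (\<lambda>i. if (xs @ [x]) ! i then 1 else 0) (length (xs @ [x]))
      = build (\<lambda>i. if (xs @ [x]) ! i then 1 else 0) (length xs) + 2 ^ length xs * Suc (if x then 1 else 0)"
    by (simp add: build_Suc)
  also have "build (\<lambda>i. if (xs @ [x]) ! i then 1 else 0) (length xs) = bcode xs"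
    unfolding snoc by (rule build_cong) (simp add: nth_append)
  finally show ?case by (simp add: bcode_append)
qed (simp add: build_def sumc_def)

lemma build_map: "build (\<lambda>i. if P i then 1 else 0) N = bcode (map P [0..<N])"
  by (subst bcode_build) (auto intro!: build_cong)

definition appc :: "nat \<Rightarrow> nat \<Rightarrow> nat" where "appc a b = a + 2 ^ lenc a * b"

lemma pc_appc[pci]: assumes "pc k a" "pc k b" shows "pc k (\<lambda>xs. appc (a xs) (b xs))"
  unfolding appc_def by (intro pci assms)

lemma appc_bcode[simp]: "appc (bcode xs) (bcode ys) = bcode (xs @ ys)"
  by (simp add: appc_def bcode_append)

definition leastc :: "(nat \<Rightarrow> bool) \<Rightarrow> nat \<Rightarrow> nat" where
  "leastc P B = PR B (\<lambda>a i. if a = B \<and> P i then i else a) B"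

lemma leastc_eq: "leastc P B = (if \<exists>i<B. P i then LEAST i. P i else B)"
proof -
  have "m \<le> B \<Longrightarrow> PR B (\<lambda>a i. if a = B \<and> P i then i else a) m = (if \<exists>i<m. P i then LEAST i. P i else B)" for m
  proof (induction m)
    case (Suc m)
    show ?case
    proof (cases "\<exists>i<m. P i")
      case True
      then have "(LEAST i. P i) < m" by (meson Least_le le_less_trans)
      moreover have "\<exists>i<Suc m. P i" using True by (meson less_SucI)
      ultimately show ?thesis using True Suc by auto
    next
      case False
      then show ?thesis using Suc by (auto simp: less_Suc_eq intro!: Least_equality[symmetric] leI)
    qed
  qed simp
  thus ?thesis by (simp add: leastc_def)
qed

lemma pc_leastc[pci]:
  assumes "pcP (Suc k) (\<lambda>ys. P (ys!0) (drop 1 ys))" "pc k B"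
  shows "pc k (\<lambda>xs. leastc (\<lambda>i. P i xs) (B xs))"
  unfolding leastc_def
  by (intro pc_PR pci assms pcP_g1[OF assms(1)] pcL_drop' pc_wk2 | simp)+

lemma pcP_ex[pci]:
  assumes "pcP (Suc k) (\<lambda>ys. P (ys!0) (drop 1 ys))" "pc k B"
  shows "pcP k (\<lambda>xs. \<exists>i<B xs. P i xs)"
proof -
  have "pcP k (\<lambda>xs. leastc (\<lambda>i. P i xs) (B xs) < B xs)"
    by (intro pci assms)
  moreover have "(leastc (\<lambda>i. P i xs) (B xs) < B xs) = (\<exists>i<B xs. P i xs)" for xs
    by (auto simp: leastc_eq intro: le_less_trans[OF Least_le])
  ultimately show ?thesis by simp
qed

definition rowc :: "(nat \<Rightarrow> nat \<Rightarrow> nat) \<Rightarrow> nat \<Rightarrow> nat \<Rightarrow> nat" where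
  "rowc g i n = PR 0 (\<lambda>b j. appc b (g i (Suc (i + j)))) (n - i)"

definition nestc :: "(nat \<Rightarrow> nat \<Rightarrow> nat) \<Rightarrow> nat \<Rightarrow> nat" where
  "nestc g n = PR 0 (\<lambda>a i. appc a (rowc g (Suc i) n)) n"

lemma pc_rowc:
  assumes "pc (Suc (Suc k)) (\<lambda>ys. g (ys!0) (ys!1) (drop 2 ys))" "pc k I" "pc k N"
  shows "pc k (\<lambda>xs. rowc (\<lambda>i j. g i j xs) (I xs) (N xs))"
  unfolding rowc_def
  by (intro pc_PR pci assms pc_wk2[OF assms(2)] pc_wk2[OF assms(3)] pc_g2[OF assms(1)] pcL_drop' | simp)+

lemma pc_nestc[pci]:
  assumes "pc (Suc (Suc k)) (\<lambda>ys. g (ys!0) (ys!1) (drop 2 ys))" "pc k N"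
  shows "pc k (\<lambda>xs. nestc (\<lambda>i j. g i j xs) (N xs))"
proof -
  have h: "pc (Suc (Suc (Suc (Suc k)))) (\<lambda>zs. g (zs!0) (zs!1) (drop 2 (drop 2 zs)))"
    by (rule pc_g2[OF assms(1)]) (auto intro: pc_proj simp: pcL_drop')
  show ?thesis unfolding nestc_def
    by (intro pc_PR pci assms pc_rowc[where g="\<lambda>i j ys. g i j (drop 2 ys)", OF h] pc_wk2[OF assms(2)] | simp)+
qed

lemma rowc_bcode:
  assumes "\<And>i j. g i j = bcode (G i j)"
  shows "rowc g i n = bcode (concat (map (G i) [Suc i..<Suc n]))"
proof -
  have "PR 0 (\<lambda>b j. appc b (g i (Suc (i + j)))) t = bcode (concat (map (G i) [Suc i..<Suc i + t]))" for t
    by (induction t) (auto simp: assms)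
  from this[of "n - i"] show ?thesis
    by (cases "i \<le> n") (auto simp: rowc_def)
qed

lemma pairs_lex_concat:
  "concat (map (\<lambda>(i, j). G i j) (pairs_lex n)) = concat (map (\<lambda>i. concat (map (G i) [Suc i..<Suc n])) [1..<Suc n])"
proof -
  have cc: "concat (concat xss) = concat (map concat xss)" for xss :: "'a list list list"
    by (induction xss) auto
  show ?thesis by (simp add: pairs_lex_def map_concat o_def cc del: upt_Suc)
qed

lemma nestc_bcode:
  assumes "\<And>i j. g i j = bcode (G i j)"
  shows "nestc g n = bcode (concat (map (\<lambda>(i, j). G i j) (pairs_lex n)))"
proof -
  have "PR 0 (\<lambda>a i. appc a (rowc g (Suc i) n)) t = bcode (concat (map (\<lambda>i. concat (map (G i) [Suc i..<Suc n])) [1..<Suc t]))" for t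
    by (induction t) (auto simp: rowc_bcode[OF assms])
  thus ?thesis by (simp add: nestc_def pairs_lex_concat)
qed

definition wtc :: "nat \<Rightarrow> nat" where "wtc x = sumc (\<lambda>i. nthc x i) (lenc x)"
definition takec :: "nat \<Rightarrow> nat \<Rightarrow> nat" where "takec k x = build (\<lambda>i. nthc x i) k"
definition binval :: "nat \<Rightarrow> nat \<Rightarrow> nat \<Rightarrow> nat" where
  "binval x off w = sumc (\<lambda>k. 2 ^ k * nthc x (off + k)) w"
definition encc :: "nat \<Rightarrow> nat" where
  "encc x = build (\<lambda>i. if i mod 2 = 0 then 1 else nthc x (i div 2)) (2 * lenc x)"
definition mergec :: "nat \<Rightarrow> nat \<Rightarrow> nat \<Rightarrow> nat" where
  "mergec m s r = build (\<lambda>k. if nthc m k = 1 then nthc s (sumc (\<lambda>j. nthc m j) k)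
      else nthc r (k - sumc (\<lambda>j. nthc m j) k)) (lenc m)"
definition unaryc :: "nat \<Rightarrow> nat" where "unaryc n = build (\<lambda>i. 1) n"

lemma pc_wtc[pci]: assumes "pc k a" shows "pc k (\<lambda>xs. wtc (a xs))"
proof (rule pc_comp1[where F=wtc, OF _ assms])
  show "pc 1 (\<lambda>ys. wtc (ys!0))" unfolding wtc_def by (intro pci | simp)+
qed
lemma pc_takec[pci]: assumes "pc k a" "pc k b" shows "pc k (\<lambda>xs. takec (a xs) (b xs))"
proof (rule pc_comp2[where F=takec, OF _ assms])
  show "pc 2 (\<lambda>ys. takec (ys!0) (ys!1))" unfolding takec_def by (intro pci | simp)+
qed
lemma pc_binval[pci]: assumes "pc k a" "pc k b" "pc k c" shows "pc k (\<lambda>xs. binval (a xs) (b xs) (c xs))"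
proof (rule pc_comp3[where F=binval, OF _ assms])
  show "pc 3 (\<lambda>ys. binval (ys!0) (ys!1) (ys!2))" unfolding binval_def by (intro pci | simp)+
qed
lemma pc_encc[pci]: assumes "pc k a" shows "pc k (\<lambda>xs. encc (a xs))"
proof (rule pc_comp1[where F=encc, OF _ assms])
  show "pc 1 (\<lambda>ys. encc (ys!0))" unfolding encc_def by (intro pci | simp)+
qed
lemma pc_mergec[pci]: assumes "pc k a" "pc k b" "pc k c" shows "pc k (\<lambda>xs. mergec (a xs) (b xs) (c xs))"
proof (rule pc_comp3[where F=mergec, OF _ assms])
  show "pc 3 (\<lambda>ys. mergec (ys!0) (ys!1) (ys!2))" unfolding mergec_def by (intro pci | simp)+
qed
lemma pc_unaryc[pci]: assumes "pc k a" shows "pc k (\<lambda>xs. unaryc (a xs))"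
proof (rule pc_comp1[where F=unaryc, OF _ assms])
  show "pc 1 (\<lambda>ys. unaryc (ys!0))" unfolding unaryc_def by (intro pci | simp)+
qed

lemma sum_ind_take: "k \<le> length xs \<Longrightarrow> (\<Sum>j<k. if P (xs ! j) then 1 else 0) = length (filter P (take k xs))"
  by (induction k) (auto simp: take_Suc_conv_app_nth)

lemma wtc_bcode[simp]: "wtc (bcode xs) = length (filter id xs)"
proof -
  have "wtc (bcode xs) = (\<Sum>j<length xs. if id (xs ! j) then 1 else 0)"
    by (simp add: wtc_def sumc_eq)
  also have "\<dots> = length (filter id xs)" by (subst sum_ind_take) auto
  finally show ?thesis .
qed

lemma takec_bcode[simp]: "takec (length xs) (bcode (xs @ ys)) = bcode xs"
  by (subst (2) bcode_build) (auto simp: takec_def nth_append intro!: build_cong)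

lemma unaryc_eq[simp]: "unaryc n = bcode (unary n)"
proof -
  have "unaryc n = bcode (map (\<lambda>_. True) [0..<n])"
    unfolding unaryc_def using build_map[of "\<lambda>_. True" n] by simp
  thus ?thesis by (simp add: unary_def map_replicate_const)
qed

definition bin :: "nat \<Rightarrow> nat \<Rightarrow> bool list" where
  "bin w v = map (\<lambda>k. odd (v div 2 ^ k)) [0..<w]"

lemma length_bin[simp]: "length (bin w v) = w" by (simp add: bin_def)

lemma sum_bits: "(\<Sum>k<w. 2 ^ k * (v div 2 ^ k mod 2)) = (v::nat) mod 2 ^ w"
proof (induction w)
  case (Suc w)
  have "v mod 2 ^ Suc w = 2 ^ w * (v div 2 ^ w mod 2) + v mod 2 ^ w"
    by (metis mod_mult2_eq power_Suc2)
  thus ?case using Suc by simp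
qed simp

lemma binval_bcode:
  assumes "v < 2 ^ w"
  shows "binval (bcode (pre @ bin w v @ post)) (length pre) w = v"
proof -
  have "binval (bcode (pre @ bin w v @ post)) (length pre) w = (\<Sum>k<w. 2 ^ k * (v div 2 ^ k mod 2))"
    unfolding binval_def sumc_eq
    by (rule sum.cong) (auto simp: nth_append bin_def odd_iff_mod_2_eq_one)
  also have "\<dots> = v" using assms by (simp add: sum_bits)
  finally show ?thesis .
qed

lemma enc_nth: "i < 2 * length xs \<Longrightarrow> concat (map (\<lambda>b. [True, b]) xs) ! i = (if i mod 2 = 0 then True else xs ! (i div 2))"
proof (induction xs arbitrary: i)
  case (Cons a xs)
  show ?case
  proof (cases i)
    case (Suc i')
    show ?thesis
    proof (cases i')
      case (Suc i'')
      then show ?thesis using Cons \<open>i = Suc i'\<close> by auto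
    qed (use Suc in auto)
  qed simp
qed simp

lemma length_enc: "length (concat (map (\<lambda>b. [True, b]) xs)) = 2 * length xs"
  by (induction xs) auto

lemma encc_bcode[simp]: "encc (bcode xs) = bcode (concat (map (\<lambda>b. [True, b]) xs))"
  by (subst (2) bcode_build) (auto simp: encc_def length_enc enc_nth intro!: build_cong)

definition tupc3 :: "nat \<Rightarrow> nat \<Rightarrow> nat \<Rightarrow> nat" where
  "tupc3 a b c = appc (appc (encc a) (bcode [False, False]))
     (appc (appc (encc b) (bcode [False, False])) (appc (encc c) (bcode [False, False])))"

lemma pc_tupc3[pci]: assumes "pc k a" "pc k b" "pc k c" shows "pc k (\<lambda>xs. tupc3 (a xs) (b xs) (c xs))"
  unfolding tupc3_def by (intro pci assms)

lemma tupc3_bcode: "tupc3 (bcode a) (bcode b) (bcode c) = bcode (tuple_enc [a, b, c])"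
  unfolding tupc3_def tuple_enc_def by (simp del: bcode_Cons)

lemma concat_map_if1: "concat (map (\<lambda>x. if P x then [f x] else []) xs) = map f (filter P xs)"
  by (induction xs) auto

lemma filter_nth_take:
  assumes "k < length xs" "P (xs ! k)"
  shows "length (filter P (take k xs)) < length (filter P xs) \<and> filter P xs ! length (filter P (take k xs)) = xs ! k"
proof -
  have "xs = take k xs @ xs ! k # drop (Suc k) xs" using assms(1) by (simp add: id_take_nth_drop)
  then have "filter P xs = filter P (take k xs) @ xs ! k # filter P (drop (Suc k) xs)"
    using assms(2) by (metis filter.simps(2) filter_append)
  thus ?thesis by simp
qed

lemma mergec_bcode:
  "mergec (bcode (map P xs)) (bcode (concat (map (\<lambda>x. if P x then [f x] else []) xs)))
      (bcode (concat (map (\<lambda>x. if P x then [] else [g x]) xs)))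
   = bcode (map (\<lambda>x. if P x then f x else g x) xs)"
proof -
  have cg: "concat (map (\<lambda>x. if P x then [] else [g x]) xs) = map g (filter (\<lambda>x. \<not> P x) xs)"
    by (induction xs) auto
  have key: "(if nthc (bcode (map P xs)) k = 1
          then nthc (bcode (map f (filter P xs))) (sumc (\<lambda>j. nthc (bcode (map P xs)) j) k)
          else nthc (bcode (map g (filter (\<lambda>x. \<not> P x) xs))) (k - sumc (\<lambda>j. nthc (bcode (map P xs)) j) k)) =
         (if map (\<lambda>x. if P x then f x else g x) xs ! k then 1 else 0)" if k: "k < length xs" for k
  proof -
    have s: "sumc (\<lambda>j. nthc (bcode (map P xs)) j) k = length (filter P (take k xs))"
      using k by (simp add: sumc_eq sum_ind_take[symmetric])
    have lk: "length (filter P (take k xs)) + length (filter (\<lambda>x. \<not> P x) (take k xs)) = k"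
      using k sum_length_filter_compl[of P "take k xs"] by simp
    show ?thesis
    proof (cases "P (xs ! k)")
      case True
      with filter_nth_take[OF k, of P] show ?thesis using k by (simp add: s)
    next
      case False
      have "k - length (filter P (take k xs)) = length (filter (\<lambda>x. \<not> P x) (take k xs))" using lk by arith
      with False filter_nth_take[OF k, of "\<lambda>x. \<not> P x"] show ?thesis using k by (simp add: s)
    qed
  qed
  have "bcode (map (\<lambda>x. if P x then f x else g x) xs) =
     build (\<lambda>i. if map (\<lambda>x. if P x then f x else g x) xs ! i then 1 else 0) (length xs)"
    by (subst bcode_build) simp
  also have "\<dots> = build (\<lambda>k. if nthc (bcode (map P xs)) k = 1
          then nthc (bcode (map f (filter P xs))) (sumc (\<lambda>j. nthc (bcode (map P xs)) j) k)
          else nthc (bcode (map g (filter (\<lambda>x. \<not> P x) xs))) (k - sumc (\<lambda>j. nthc (bcode (map P xs)) j) k)) (length xs)"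
    by (rule build_cong) (rule key[symmetric], assumption)
  finally show ?thesis unfolding mergec_def concat_map_if1 cg by simp
qed

section \<open>Counting, ranking, unranking\<close>

definition validc :: "nat \<Rightarrow> nat \<Rightarrow> nat \<Rightarrow> bool" where
  "validc D d x \<longleftrightarrow> lenc x = D \<and> wtc x = d"
definition rankc :: "nat \<Rightarrow> nat \<Rightarrow> nat \<Rightarrow> nat" where
  "rankc D d x = sumc (\<lambda>y. if validc D d y then 1 else 0) x"
definition cntc :: "nat \<Rightarrow> nat \<Rightarrow> nat" where
  "cntc D d = rankc D d (2 ^ Suc D)"
definition unrankc :: "nat \<Rightarrow> nat \<Rightarrow> nat \<Rightarrow> nat" where
  "unrankc D d r = leastc (\<lambda>x. validc D d x \<and> rankc D d x = r) (2 ^ Suc D)"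
definition Lc :: "nat \<Rightarrow> nat" where
  "Lc c = leastc (\<lambda>l. c \<le> 2 ^ l) (Suc c)"
definition Wn :: "nat \<Rightarrow> nat" where
  "Wn n = leastc (\<lambda>w. n < 2 ^ w) (Suc n)"

lemma pcP_validc[pci]: assumes "pc k a" "pc k b" "pc k c" shows "pcP k (\<lambda>xs. validc (a xs) (b xs) (c xs))"
  unfolding validc_def by (intro pci assms)
lemma pc_rankc[pci]: assumes "pc k a" "pc k b" "pc k c" shows "pc k (\<lambda>xs. rankc (a xs) (b xs) (c xs))"
proof (rule pc_comp3[where F=rankc, OF _ assms])
  show "pc 3 (\<lambda>ys. rankc (ys!0) (ys!1) (ys!2))" unfolding rankc_def by (intro pci | simp)+
qed
lemma pc_cntc[pci]: assumes "pc k a" "pc k b" shows "pc k (\<lambda>xs. cntc (a xs) (b xs))"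
  unfolding cntc_def by (intro pci assms)
lemma pc_unrankc[pci]: assumes "pc k a" "pc k b" "pc k c" shows "pc k (\<lambda>xs. unrankc (a xs) (b xs) (c xs))"
proof (rule pc_comp3[where F=unrankc, OF _ assms])
  show "pc 3 (\<lambda>ys. unrankc (ys!0) (ys!1) (ys!2))" unfolding unrankc_def by (intro pci | simp)+
qed
lemma pc_Lc[pci]: assumes "pc k a" shows "pc k (\<lambda>xs. Lc (a xs))"
proof (rule pc_comp1[where F=Lc, OF _ assms])
  show "pc 1 (\<lambda>ys. Lc (ys!0))" unfolding Lc_def by (intro pci | simp)+
qed
lemma pc_Wn[pci]: assumes "pc k a" shows "pc k (\<lambda>xs. Wn (a xs))"
proof (rule pc_comp1[where F=Wn, OF _ assms])
  show "pc 1 (\<lambda>ys. Wn (ys!0))" unfolding Wn_def by (intro pci | simp)+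
qed

lemma bcode_less2: "bcode xs + 2 \<le> 2 ^ Suc (length xs)"
proof (induction xs)
  case (Cons a xs)
  then have "2 * bcode xs + 4 \<le> 2 ^ Suc (Suc (length xs))" by simp
  then show ?case by simp
qed simp

lemma bcode_less: "bcode xs < 2 ^ Suc (length xs)"
  using bcode_less2[of xs] by simp

lemma validc_bcode: "validc D d (bcode xs) \<longleftrightarrow> length xs = D \<and> length (filter id xs) = d"
  by (simp add: validc_def)

lemma validc_less: "validc D d x \<Longrightarrow> x < 2 ^ Suc D"
  using bcode_less[of "bdec x"] validc_bcode[of D d "bdec x"] by simp

lemma rankc_Suc: "rankc D d (Suc x) = rankc D d x + (if validc D d x then 1 else 0)"
  by (simp add: rankc_def sumc_def)

lemma rankc_mono: "x \<le> y \<Longrightarrow> rankc D d x \<le> rankc D d y"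
proof (induction y)
  case (Suc y) then show ?case by (cases "x = Suc y") (auto simp: rankc_Suc le_Suc_eq)
qed simp

lemma rankc_strict: "y < x \<Longrightarrow> validc D d y \<Longrightarrow> rankc D d y < rankc D d x"
  using rankc_mono[of "Suc y" x D d] by (simp add: rankc_Suc)

lemma unrank_rank:
  assumes "validc D d x0"
  shows "unrankc D d (rankc D d x0) = x0"
proof -
  have lt: "x0 < 2 ^ Suc D" using validc_less[OF assms] .
  have "(LEAST x. validc D d x \<and> rankc D d x = rankc D d x0) = x0"
  proof (rule Least_equality)
    fix y assume y: "validc D d y \<and> rankc D d y = rankc D d x0"
    show "x0 \<le> y"
    proof (rule ccontr)
      assume "\<not> x0 \<le> y"
      then have "rankc D d y < rankc D d x0" using rankc_strict[of y x0 D d] y by auto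
      with y show False by simp
    qed
  qed (use assms in simp)
  thus ?thesis unfolding unrankc_def leastc_eq using lt assms by auto
qed

lemma rank_less_cnt: "validc D d x0 \<Longrightarrow> rankc D d x0 < cntc D d"
  unfolding cntc_def using rankc_strict validc_less by blast

lemma sum_ind_card: "(\<Sum>x<(B::nat). if P x then 1 else 0) = card {x. x < B \<and> P x}"
proof -
  have "(\<Sum>x<B. if P x then 1 else 0) = (\<Sum>x\<in>{x. x < B \<and> P x}. (1::nat))"
    by (subst sum.inter_filter[symmetric]) (auto intro: sum.cong simp: lessThan_def[symmetric])
  thus ?thesis by simp
qed

lemma cntc_card: "cntc D d = card {xs. length xs = D \<and> length (filter id xs) = d}"
proof -
  let ?S = "{xs. length xs = D \<and> length (filter id xs) = d}"
  have "cntc D d = card {x. x < 2 ^ Suc D \<and> validc D d x}"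
    by (simp add: cntc_def rankc_def sumc_eq sum_ind_card)
  also have "{x. x < 2 ^ Suc D \<and> validc D d x} = bcode ` ?S"
  proof (rule set_eqI, rule iffI)
    fix x assume "x \<in> {x. x < 2 ^ Suc D \<and> validc D d x}"
    then have "bdec x \<in> ?S" using validc_bcode[of D d "bdec x"] by simp
    thus "x \<in> bcode ` ?S" by (metis bcode_bdec image_eqI)
  next
    fix x assume "x \<in> bcode ` ?S"
    then show "x \<in> {x. x < 2 ^ Suc D \<and> validc D d x}"
      using bcode_less validc_bcode by auto
  qed
  also have "card (bcode ` ?S) = card ?S"
    by (rule card_image) (meson bcode_inj inj_onI)
  finally show ?thesis .
qed

lemma Lc_props: "c \<le> 2 ^ Lc c \<and> (Lc c = 0 \<or> 2 ^ (Lc c - 1) < c)"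
proof -
  have ex: "\<exists>l<Suc c. c \<le> 2 ^ l" by (rule exI[of _ c]) (simp add: less_imp_le)
  have L: "Lc c = (LEAST l. c \<le> 2 ^ l)" unfolding Lc_def leastc_eq using ex by simp
  have "c \<le> 2 ^ Lc c" unfolding L using ex by (meson LeastI)
  moreover have "Lc c = 0 \<or> 2 ^ (Lc c - 1) < c"
  proof (cases "Lc c = 0")
    case False
    then have "\<not> c \<le> 2 ^ (Lc c - 1)" unfolding L by (intro not_less_Least) (use L False in simp)
    then show ?thesis by simp
  qed simp
  ultimately show ?thesis by blast
qed

lemma Wn_props: "n < 2 ^ Wn n \<and> (Wn n = 0 \<or> 2 ^ (Wn n - 1) \<le> n)"
proof -
  have ex: "\<exists>w<Suc n. n < 2 ^ w" by (rule exI[of _ n]) simp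
  have L: "Wn n = (LEAST w. n < 2 ^ w)" unfolding Wn_def leastc_eq using ex by simp
  have "n < 2 ^ Wn n" unfolding L using ex by (meson LeastI)
  moreover have "Wn n = 0 \<or> 2 ^ (Wn n - 1) \<le> n"
  proof (cases "Wn n = 0")
    case False
    then have "\<not> n < 2 ^ (Wn n - 1)" unfolding L by (intro not_less_Least) (use L False in simp)
    then show ?thesis by simp
  qed simp
  ultimately show ?thesis by blast
qed

section \<open>The two decoders\<close>

definition d1W :: "nat \<Rightarrow> nat" where "d1W y = Wn (lenc y)"
definition d1u :: "nat \<Rightarrow> nat \<Rightarrow> nat" where "d1u p y = binval p 0 (d1W y)"
definition d1d :: "nat \<Rightarrow> nat \<Rightarrow> nat" where "d1d p y = binval p (d1W y) (d1W y)"
definition d1L :: "nat \<Rightarrow> nat \<Rightarrow> nat" where "d1L p y = Lc (cntc (lenc y - 1) (d1d p y))"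
definition d1r :: "nat \<Rightarrow> nat \<Rightarrow> nat" where "d1r p y = binval p (2 * d1W y) (d1L p y)"
definition d1R :: "nat \<Rightarrow> nat \<Rightarrow> nat" where "d1R p y = dropc (2 * d1W y + d1L p y) p"
definition d1row :: "nat \<Rightarrow> nat \<Rightarrow> nat" where "d1row p y = unrankc (lenc y - 1) (d1d p y) (d1r p y)"
definition d1mask :: "nat \<Rightarrow> nat \<Rightarrow> nat" where
  "d1mask u n = nestc (\<lambda>i j. Suc (if i = u \<or> j = u then 1 else 0)) n"
definition idx1 :: "nat \<Rightarrow> nat \<Rightarrow> nat \<Rightarrow> nat" where
  "idx1 u i j = (if i = u then j - 2 else i - 1)"
definition d1S :: "nat \<Rightarrow> nat \<Rightarrow> nat \<Rightarrow> nat" where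
  "d1S rw u n = nestc (\<lambda>i j. if i = u \<or> j = u then Suc (nthc rw (idx1 u i j)) else 0) n"
definition dec1 :: "nat \<Rightarrow> nat \<Rightarrow> nat" where
  "dec1 p y = mergec (d1mask (d1u p y) (lenc y)) (d1S (d1row p y) (d1u p y) (lenc y)) (d1R p y)"

lemma pc_dec1: "pc 2 (\<lambda>xs. dec1 (xs!0) (xs!1))"
  unfolding dec1_def d1mask_def d1S_def d1R_def d1row_def d1r_def d1L_def d1d_def d1u_def d1W_def idx1_def
  by (intro pci | simp)+

definition rbc :: "nat \<Rightarrow> nat \<Rightarrow> nat \<Rightarrow> nat" where "rbc p W x = nthc p (W + (x - 1))"
definition hbc :: "nat \<Rightarrow> nat \<Rightarrow> nat \<Rightarrow> nat \<Rightarrow> nat" where "hbc p W n v = nthc p (W + n + (v - 1))"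
definition d2m :: "nat \<Rightarrow> nat \<Rightarrow> nat \<Rightarrow> nat" where "d2m p W n = binval p (W + 2 * n) W"
definition sgc :: "nat \<Rightarrow> nat \<Rightarrow> nat \<Rightarrow> nat \<Rightarrow> nat" where "sgc p W n l = binval p (2 * W + 2 * n + l * W) W"
definition PBc :: "nat \<Rightarrow> nat \<Rightarrow> nat \<Rightarrow> nat \<Rightarrow> nat \<Rightarrow> bool" where
  "PBc p W u i j \<longleftrightarrow> (rbc p W i = 1 \<and> j \<noteq> u \<and> rbc p W j \<noteq> 1) \<or> (rbc p W j = 1 \<and> i \<noteq> u \<and> rbc p W i \<noteq> 1)"
definition d2mask :: "nat \<Rightarrow> nat \<Rightarrow> nat \<Rightarrow> nat \<Rightarrow> nat" where
  "d2mask p W u n = nestc (\<lambda>i j. Suc (if PBc p W u i j then 1 else 0)) n"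
definition offR :: "nat \<Rightarrow> nat \<Rightarrow> nat \<Rightarrow> nat" where "offR p W n = 2 * W + 2 * n + d2m p W n * W"
definition lenR :: "nat \<Rightarrow> nat \<Rightarrow> nat \<Rightarrow> nat \<Rightarrow> nat" where
  "lenR p W u n = lenc (d2mask p W u n) - wtc (d2mask p W u n)"
definition d2R :: "nat \<Rightarrow> nat \<Rightarrow> nat \<Rightarrow> nat \<Rightarrow> nat" where
  "d2R p W u n = takec (lenR p W u n) (dropc (offR p W n) p)"
definition d2q :: "nat \<Rightarrow> nat \<Rightarrow> nat \<Rightarrow> nat \<Rightarrow> nat" where
  "d2q p W u n = dropc (offR p W n + lenR p W u n) p"
definition posc :: "nat \<Rightarrow> nat \<Rightarrow> nat" where "posc u v = (if v < u then v - 1 else v - 2)"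
definition wB :: "nat \<Rightarrow> nat \<Rightarrow> nat \<Rightarrow> nat \<Rightarrow> nat" where "wB p W i j = (if rbc p W i = 1 then i else j)"
definition vB :: "nat \<Rightarrow> nat \<Rightarrow> nat \<Rightarrow> nat \<Rightarrow> nat" where "vB p W i j = (if rbc p W i = 1 then j else i)"
definition bitBc :: "nat \<Rightarrow> nat \<Rightarrow> nat \<Rightarrow> nat \<Rightarrow> nat \<Rightarrow> nat \<Rightarrow> nat \<Rightarrow> bool" where
  "bitBc t p W u n i j \<longleftrightarrow> hbc p W n (vB p W i j) = 1 \<and>
     (\<exists>l<d2m p W n. sgc p W n l = wB p W i j \<and> nthc t (posc u (vB p W i j) * d2m p W n + l) = 1)"
definition d2S :: "nat \<Rightarrow> nat \<Rightarrow> nat \<Rightarrow> nat \<Rightarrow> nat \<Rightarrow> nat" where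
  "d2S t p W u n = nestc (\<lambda>i j. if PBc p W u i j then Suc (if bitBc t p W u n i j then 1 else 0) else 0) n"
definition dec2' :: "nat \<Rightarrow> nat \<Rightarrow> nat \<Rightarrow> nat \<Rightarrow> nat \<Rightarrow> nat" where
  "dec2' t p W u n = mergec (d2mask p W u n) (d2S t p W u n) (d2R p W u n)"
definition dec2 :: "nat \<Rightarrow> nat \<Rightarrow> nat \<Rightarrow> nat" where
  "dec2 t p y = dec2' t p (Wn (lenc y)) (binval p 0 (Wn (lenc y))) (lenc y)"
definition qf :: "nat \<Rightarrow> nat \<Rightarrow> nat" where
  "qf p y = d2q p (Wn (lenc y)) (binval p 0 (Wn (lenc y))) (lenc y)"
definition zf :: "nat \<Rightarrow> nat \<Rightarrow> nat" where
  "zf p y = tupc3 (unaryc (lenc y)) (unaryc (binval p 0 (Wn (lenc y)))) (takec (lenc y) (dropc (Wn (lenc y)) p))"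

lemma pc_qf: "pc 2 (\<lambda>xs. qf (xs!0) (xs!1))"
  unfolding qf_def d2q_def offR_def lenR_def d2mask_def d2m_def PBc_def rbc_def
  by (intro pci | simp)+

lemma pc_zf: "pc 2 (\<lambda>xs. zf (xs!0) (xs!1))"
  unfolding zf_def by (intro pci | simp)+

lemma pc_dec2: "pc 3 (\<lambda>xs. dec2 (xs!0) (xs!1) (xs!2))"
  unfolding dec2_def dec2'_def d2S_def bitBc_def wB_def vB_def posc_def sgc_def hbc_def
    d2R_def offR_def lenR_def d2mask_def d2m_def PBc_def rbc_def
  by (intro pci | simp)+

lemma set_pairs_lex: "set (pairs_lex n) = {(i, j). 1 \<le> i \<and> i < j \<and> j \<le> n}"
proof -
  have "set (pairs_lex n) = (\<Union>i\<in>{1..<Suc n}. Pair i ` {Suc i..<Suc n})"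
    by (simp add: pairs_lex_def del: upt_Suc)
  also have "\<dots> = {(i, j). 1 \<le> i \<and> i < j \<and> j \<le> n}"
  proof (rule set_eqI, rule iffI)
    fix x assume "x \<in> {(i, j). 1 \<le> i \<and> i < j \<and> j \<le> n}"
    then obtain a b where "x = (a, b)" "1 \<le> a" "a < b" "b \<le> n" by auto
    then show "x \<in> (\<Union>i\<in>{1..<Suc n}. Pair i ` {Suc i..<Suc n})" by (intro UN_I[of a]) auto
  qed auto
  finally show ?thesis .
qed

lemma distinct_rows: "distinct xs \<Longrightarrow> (\<forall>i\<in>set xs. distinct (L i)) \<Longrightarrow>
  distinct (concat (map (\<lambda>i. map (Pair i) (L i)) xs))"
  by (induction xs) (auto simp: distinct_map inj_on_def)

lemma distinct_pairs_lex: "distinct (pairs_lex n)"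
  unfolding pairs_lex_def by (rule distinct_rows) auto

lemma sum_list_Suc_diff: "\<forall>i\<in>set xs. i \<le> n \<Longrightarrow>
  sum_list (map (\<lambda>i. Suc n - i) xs) = sum_list (map (\<lambda>i. n - i) xs) + length xs"
  by (induction xs) (auto simp: Suc_diff_le)

lemma length_pairs_lex: "length (pairs_lex n) = n * (n - 1) div 2"
proof -
  have "length (pairs_lex n) = sum_list (map (\<lambda>i. n - i) [1..<Suc n])"
    by (simp add: pairs_lex_def length_concat o_def del: upt_Suc)
  moreover have "2 * sum_list (map (\<lambda>i. n - i) [1..<Suc n]) = n * (n - 1)"
  proof (induction n)
    case (Suc n)
    have "sum_list (map (\<lambda>i. Suc n - i) [1..<Suc (Suc n)]) = sum_list (map (\<lambda>i. Suc n - i) [1..<Suc n])"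
      by simp
    also have "\<dots> = sum_list (map (\<lambda>i. n - i) [1..<Suc n]) + n"
      by (subst sum_list_Suc_diff) auto
    finally show ?case using Suc by (cases n) (auto simp: algebra_simps)
  qed simp
  ultimately show ?thesis by simp
qed

lemma adj_sym: "adj G u v = adj G v u" by (auto simp: adj_def)

lemma labeled_adj_range: "labeled_graph n G \<Longrightarrow> adj G u v \<Longrightarrow> u \<in> {1..n} \<and> v \<in> {1..n} \<and> u \<noteq> v"
  by (auto simp: labeled_graph_def adj_def)

lemma E_adj: "labeled_graph n G \<Longrightarrow> E n G = map (\<lambda>x. adj G (fst x) (snd x)) (pairs_lex n)"
  unfolding E_def
proof (rule map_cong[OF refl])
  fix x assume "labeled_graph n G" "x \<in> set (pairs_lex n)"
  then show "(x \<in> G) = adj G (fst x) (snd x)"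
    by (cases x) (auto simp: adj_def labeled_graph_def set_pairs_lex)
qed

lemma filter_ne_upt:
  assumes "1 \<le> u" "u \<le> n"
  shows "filter (\<lambda>x. x \<noteq> u) [1..<Suc n] = [1..<u] @ [Suc u..<Suc n]"
proof -
  have "[1..<Suc n] = [1..<u] @ [u..<u + (Suc n - u)]" using assms upt_add_eq_append[of 1 u "Suc n - u"] by simp
  also have "u + (Suc n - u) = Suc n" using assms by simp
  also have "[u..<Suc n] = u # [Suc u..<Suc n]" using assms by (intro upt_conv_Cons) auto
  finally have e: "[1..<Suc n] = [1..<u] @ u # [Suc u..<Suc n]" .
  show ?thesis unfolding e by (simp del: upt_Suc)
qed

lemma filter_ne_nth:
  assumes "1 \<le> u" "u \<le> n" "1 \<le> x" "x \<le> n" "x \<noteq> u"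
  shows "(if x < u then x - 1 else x - 2) < n - 1 \<and>
         filter (\<lambda>x. x \<noteq> u) [1..<Suc n] ! (if x < u then x - 1 else x - 2) = x"
  unfolding filter_ne_upt[OF assms(1,2)] using assms by (auto simp: nth_append simp del: upt_Suc)

lemma length_filter_ne: "1 \<le> u \<Longrightarrow> u \<le> n \<Longrightarrow> length (filter (\<lambda>x. x \<noteq> u) [1..<Suc n]) = n - 1"
  by (subst filter_ne_upt) auto

lemma nthc_le1: "nthc x k \<le> 1" by (simp add: nthc_def hdc_def)

lemma bcode_single: "bcode [b] = Suc (if b then 1 else 0)" by simp

lemma concat_map_single: "concat (map (\<lambda>x. [f x]) xs) = map f xs" by (induction xs) auto

definition row1 :: "nat \<Rightarrow> graph \<Rightarrow> nat \<Rightarrow> bool list" where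
  "row1 n G u = map (adj G u) (filter (\<lambda>x. x \<noteq> u) [1..<Suc n])"
definition deg :: "nat \<Rightarrow> graph \<Rightarrow> nat \<Rightarrow> nat" where
  "deg n G u = length (filter id (row1 n G u))"
definition Rst1 :: "nat \<Rightarrow> graph \<Rightarrow> nat \<Rightarrow> bool list" where
  "Rst1 n G u = concat (map (\<lambda>x. if fst x = u \<or> snd x = u then [] else [adj G (fst x) (snd x)]) (pairs_lex n))"
definition L1 :: "nat \<Rightarrow> graph \<Rightarrow> nat \<Rightarrow> nat" where
  "L1 n G u = Lc (cntc (n - 1) (deg n G u))"
definition p1 :: "nat \<Rightarrow> graph \<Rightarrow> nat \<Rightarrow> bool list" where
  "p1 n G u = bin (Wn n) u @ bin (Wn n) (deg n G u) @
     bin (L1 n G u) (rankc (n - 1) (deg n G u) (bcode (row1 n G u))) @ Rst1 n G u"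

lemma length_row1: "1 \<le> u \<Longrightarrow> u \<le> n \<Longrightarrow> length (row1 n G u) = n - 1"
  unfolding row1_def length_map by (rule length_filter_ne)

lemma deg_le: "1 \<le> u \<Longrightarrow> u \<le> n \<Longrightarrow> deg n G u \<le> n - 1"
  unfolding deg_def using length_filter_le[of id "row1 n G u"] length_row1 by simp

lemma binval_bcode0: "v < 2 ^ w \<Longrightarrow> binval (bcode (bin w v @ post)) 0 w = v"
  using binval_bcode[of v w "[]" post] by simp

lemma dec1_correct:
  assumes G: "labeled_graph n G" and u: "1 \<le> u" "u \<le> n"
  shows "dec1 (bcode (p1 n G u)) (bcode (unary n)) = bcode (E n G)"
proof -
  define W where "W = Wn n"
  define d where "d = deg n G u"
  define L where "L = L1 n G u"
  define rw where "rw = row1 n G u"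
  define r where "r = rankc (n - 1) d (bcode rw)"
  have p: "p1 n G u = bin W u @ bin W d @ bin L r @ Rst1 n G u"
    by (simp add: p1_def W_def d_def L_def r_def rw_def)
  have ln: "lenc (bcode (unary n)) = n" by (simp add: unary_def)
  have Wp: "n < 2 ^ W" using Wn_props[of n] by (simp add: W_def)
  have dle: "d \<le> n - 1" using deg_le[OF u] by (simp add: d_def)
  have valid: "validc (n - 1) d (bcode rw)"
    by (simp add: validc_bcode length_row1[OF u] rw_def d_def deg_def)
  have rL: "r < 2 ^ L"
    using rank_less_cnt[OF valid] Lc_props[of "cntc (n - 1) d"] by (simp add: r_def L_def L1_def d_def)
  have hu: "d1u (bcode (p1 n G u)) (bcode (unary n)) = u"
    unfolding d1u_def d1W_def ln p using Wp u by (simp add: binval_bcode0 W_def)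
  have hd: "d1d (bcode (p1 n G u)) (bcode (unary n)) = d"
    unfolding d1d_def d1W_def ln p using binval_bcode[of d W "bin W u" "bin L r @ Rst1 n G u"] Wp dle
    by (simp add: W_def)
  have hL: "d1L (bcode (p1 n G u)) (bcode (unary n)) = L"
    unfolding d1L_def hd ln by (simp add: L_def L1_def d_def)
  have hr: "d1r (bcode (p1 n G u)) (bcode (unary n)) = r"
    unfolding d1r_def hL unfolding d1W_def ln p
    using binval_bcode[of r L "bin W u @ bin W d" "Rst1 n G u"] rL by (simp add: W_def mult_2)
  have hR: "d1R (bcode (p1 n G u)) (bcode (unary n)) = bcode (Rst1 n G u)"
    unfolding d1R_def hL unfolding d1W_def ln p by (simp add: W_def mult_2)
  have hrow: "d1row (bcode (p1 n G u)) (bcode (unary n)) = bcode rw"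
    unfolding d1row_def hd hr ln r_def using unrank_rank[OF valid] by simp
  define P where "P = (\<lambda>x::nat \<times> nat. fst x = u \<or> snd x = u)"
  define f where "f = (\<lambda>x::nat \<times> nat. nthc (bcode rw) (idx1 u (fst x) (snd x)) = 1)"
  define g where "g = (\<lambda>x::nat \<times> nat. adj G (fst x) (snd x))"
  have hmask: "d1mask u n = bcode (map P (pairs_lex n))"
    unfolding d1mask_def
    by (subst nestc_bcode[where G="\<lambda>i j. [i = u \<or> j = u]"])
       (simp_all add: concat_map_single split_def P_def)
  have hS: "d1S (bcode rw) u n = bcode (concat (map (\<lambda>x. if P x then [f x] else []) (pairs_lex n)))"
  proof -
    have "d1S (bcode rw) u n = bcode (concat (map (\<lambda>(i, j). if i = u \<or> j = u then [nthc (bcode rw) (idx1 u i j) = 1] else []) (pairs_lex n)))"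
      unfolding d1S_def by (rule nestc_bcode) (use nthc_le1 in \<open>auto simp: le_Suc_eq\<close>)
    also have "\<dots> = bcode (concat (map (\<lambda>x. if P x then [f x] else []) (pairs_lex n)))"
      unfolding P_def f_def split_def by (rule refl)
    finally show ?thesis .
  qed
  have hRst: "Rst1 n G u = concat (map (\<lambda>x. if P x then [] else [g x]) (pairs_lex n))"
    unfolding Rst1_def P_def g_def by (rule refl)
  have "dec1 (bcode (p1 n G u)) (bcode (unary n)) = bcode (map (\<lambda>x. if P x then f x else g x) (pairs_lex n))"
    unfolding dec1_def hu ln hrow hR hmask hS hRst by (rule mergec_bcode)
  also have "map (\<lambda>x. if P x then f x else g x) (pairs_lex n) = E n G"
    unfolding E_adj[OF G]
  proof (rule map_cong[OF refl])
    fix x assume x: "x \<in> set (pairs_lex n)"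
    obtain i j where ij: "x = (i, j)" "1 \<le> i" "i < j" "j \<le> n" using x by (auto simp: set_pairs_lex)
    show "(if P x then f x else g x) = adj G (fst x) (snd x)"
    proof (cases "P x")
      case True
      define ot where "ot = (if i = u then j else i)"
      have ot: "1 \<le> ot" "ot \<le> n" "ot \<noteq> u" using True ij by (auto simp: P_def ot_def)
      have idx: "idx1 u i j = (if ot < u then ot - 1 else ot - 2)"
        using True ij by (auto simp: idx1_def ot_def P_def)
      define k where "k = (if ot < u then ot - 1 else ot - 2)"
      have k: "k < length rw" "rw ! k = adj G u ot"
        using filter_ne_nth[OF u ot] length_row1[OF u] unfolding rw_def row1_def k_def
        by (simp_all del: upt_Suc)
      have "f x = (nthc (bcode rw) k = 1)" unfolding f_def k_def using ij idx by simp
      then have fx: "f x = adj G u ot" using k by simp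
      have "adj G (fst x) (snd x) = adj G u ot" using True ij by (auto simp: P_def ot_def adj_sym)
      with fx True show ?thesis by simp
    qed (simp add: g_def)
  qed
  finally show ?thesis .
qed

lemma concat_map_if2: "concat (map (\<lambda>x. if P x then [] else [g x]) xs) = map g (filter (\<lambda>x. \<not> P x) xs)"
  by (induction xs) auto

lemma length_filter_distinct: "distinct xs \<Longrightarrow> length (filter P xs) = card {x \<in> set xs. P x}"
  using distinct_card[of "filter P xs"] by simp

lemma card_cross_pairs:
  assumes "A \<subseteq> {1..n}" "B \<subseteq> {1..n}" "A \<inter> B = {}"
  shows "card {x \<in> set (pairs_lex n). (fst x \<in> A \<and> snd x \<in> B) \<or> (fst x \<in> B \<and> snd x \<in> A)} = card A * card B"
proof -
  define f where "f = (\<lambda>x::nat \<times> nat. (min (fst x) (snd x), max (fst x) (snd x)))"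
  have fin: "finite A" "finite B" using assms finite_subset by blast+
  have img: "f ` (A \<times> B) = {x \<in> set (pairs_lex n). (fst x \<in> A \<and> snd x \<in> B) \<or> (fst x \<in> B \<and> snd x \<in> A)}"
  proof (rule set_eqI, rule iffI)
    fix x assume "x \<in> f ` (A \<times> B)"
    then obtain a b where ab: "a \<in> A" "b \<in> B" "x = f (a, b)" by auto
    have "a \<noteq> b" using ab assms(3) by auto
    then show "x \<in> {x \<in> set (pairs_lex n). (fst x \<in> A \<and> snd x \<in> B) \<or> (fst x \<in> B \<and> snd x \<in> A)}"
      using ab assms(1,2) by (auto simp: f_def set_pairs_lex min_def max_def)
  next
    fix x assume x: "x \<in> {x \<in> set (pairs_lex n). (fst x \<in> A \<and> snd x \<in> B) \<or> (fst x \<in> B \<and> snd x \<in> A)}"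
    then obtain i j where ij: "x = (i, j)" "i < j" by (auto simp: set_pairs_lex)
    show "x \<in> f ` (A \<times> B)"
    proof (cases "i \<in> A \<and> j \<in> B")
      case True
      then show ?thesis using ij by (intro image_eqI[of _ _ "(i, j)"]) (auto simp: f_def)
    next
      case False
      then have "i \<in> B" "j \<in> A" using x ij by auto
      then show ?thesis using ij by (intro image_eqI[of _ _ "(j, i)"]) (auto simp: f_def)
    qed
  qed
  have inj: "inj_on f (A \<times> B)"
  proof (rule inj_onI)
    fix x y assume "x \<in> A \<times> B" "y \<in> A \<times> B" "f x = f y"
    then show "x = y" using assms(3) unfolding f_def
      by (cases x; cases y) (auto simp: min_def max_def split: if_splits)
  qed
  have "card (f ` (A \<times> B)) = card A * card B"
    using card_image[OF inj] card_cartesian_product by metis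
  with img show ?thesis by simp
qed

lemma length_Rst_gen:
  "length (concat (map (\<lambda>x. if P x then [] else [g x]) (pairs_lex n))) =
     n * (n - 1) div 2 - card {x \<in> set (pairs_lex n). P x}"
proof -
  have "length (filter (\<lambda>x. \<not> P x) (pairs_lex n)) = length (pairs_lex n) - length (filter P (pairs_lex n))"
    using sum_length_filter_compl[of P "pairs_lex n"] by simp
  thus ?thesis by (simp add: concat_map_if2 length_pairs_lex length_filter_distinct[OF distinct_pairs_lex])
qed

lemma length_p1:
  assumes "1 \<le> u" "u \<le> n"
  shows "length (p1 n G u) = 2 * Wn n + L1 n G u + (n * (n - 1) div 2 - (n - 1))"
proof -
  have "card {x \<in> set (pairs_lex n). fst x = u \<or> snd x = u} = card {u} * card ({1..n} - {u})"
  proof -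
    have "{x \<in> set (pairs_lex n). fst x = u \<or> snd x = u} =
      {x \<in> set (pairs_lex n). (fst x \<in> {u} \<and> snd x \<in> {1..n} - {u}) \<or> (fst x \<in> {1..n} - {u} \<and> snd x \<in> {u})}"
      by (auto simp: set_pairs_lex)
    also have "card \<dots> = card {u} * card ({1..n} - {u})"
      by (rule card_cross_pairs) (use assms in auto)
    finally show ?thesis .
  qed
  also have "\<dots> = n - 1" using assms by simp
  finally have c: "card {x \<in> set (pairs_lex n). fst x = u \<or> snd x = u} = n - 1" .
  show ?thesis unfolding p1_def Rst1_def
    by (simp add: length_Rst_gen[where P="\<lambda>x. fst x = u \<or> snd x = u"] c)
qed

lemma adjrel_pow1: "(a, b) \<in> adjrel G ^^ 1 \<longleftrightarrow> adj G a b"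
  by (simp add: adjrel_def)

lemma key_sp:
  assumes "u \<noteq> v" "\<not> adj G u v" "adj G u w"
  shows "((\<exists>w'. adj G u w' \<and> adj G w' v) \<and> on_shortest_path G u v w) \<longleftrightarrow> adj G w v"
proof
  assume a: "(\<exists>w'. adj G u w' \<and> adj G w' v) \<and> on_shortest_path G u v w"
  then obtain w' where w': "adj G u w'" "adj G w' v" by blast
  have "(u, w') \<in> adjrel G ^^ 1" using w' by (simp add: adjrel_def)
  then have "(u, v) \<in> adjrel G ^^ Suc 1" using w' by (intro relpow_Suc_I) (auto simp: adjrel_def)
  then have two: "(u, v) \<in> adjrel G ^^ 2" by (simp add: numeral_2_eq_2)
  from a obtain k where k: "(w, v) \<in> adjrel G ^^ k" "\<forall>j\<le>k. (u, v) \<notin> adjrel G ^^ j"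
    unfolding on_shortest_path_def by blast
  have "k < 2" using k(2) two by (meson not_le)
  then consider "k = 0" | "k = 1" by linarith
  then show "adj G w v"
  proof cases
    case 1 then have "w = v" using k(1) by simp
    then show ?thesis using assms by simp
  next
    case 2 then show ?thesis using k(1) by (simp add: adjrel_def)
  qed
next
  assume a: "adj G w v"
  have "(w, v) \<in> adjrel G ^^ 1" using a by (simp add: adjrel_def)
  moreover have "\<forall>j\<le>1. (u, v) \<notin> adjrel G ^^ j"
  proof (intro allI impI)
    fix j :: nat assume "j \<le> 1"
    then consider "j = 0" | "j = 1" by linarith
    then show "(u, v) \<notin> adjrel G ^^ j" using assms by cases (auto simp: adjrel_def)
  qed
  ultimately have "on_shortest_path G u v w" unfolding on_shortest_path_def using assms(3) by blast
  then show "(\<exists>w'. adj G u w' \<and> adj G w' v) \<and> on_shortest_path G u v w" using a assms(3) by blast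
qed

definition rowu :: "nat \<Rightarrow> graph \<Rightarrow> nat \<Rightarrow> bool list" where
  "rowu n G u = map (adj G u) [1..<Suc n]"
definition hasN :: "nat \<Rightarrow> graph \<Rightarrow> nat \<Rightarrow> bool list" where
  "hasN n G u = map (\<lambda>v. \<exists>w. adj G u w \<and> adj G w v) [1..<Suc n]"
definition sig :: "nat \<Rightarrow> (nat \<Rightarrow> nat) \<Rightarrow> nat \<Rightarrow> bool list" where
  "sig W \<sigma> m = concat (map (\<lambda>l. bin W (\<sigma> l)) [0..<m])"
definition PB :: "graph \<Rightarrow> nat \<Rightarrow> nat \<times> nat \<Rightarrow> bool" where
  "PB G u x \<longleftrightarrow> (adj G u (fst x) \<and> snd x \<noteq> u \<and> \<not> adj G u (snd x)) \<or>
                 (adj G u (snd x) \<and> fst x \<noteq> u \<and> \<not> adj G u (fst x))"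
definition Rst2 :: "nat \<Rightarrow> graph \<Rightarrow> nat \<Rightarrow> bool list" where
  "Rst2 n G u = concat (map (\<lambda>x. if PB G u x then [] else [adj G (fst x) (snd x)]) (pairs_lex n))"
definition p2 :: "nat \<Rightarrow> graph \<Rightarrow> nat \<Rightarrow> (nat \<Rightarrow> nat) \<Rightarrow> nat \<Rightarrow> bool list \<Rightarrow> bool list" where
  "p2 n G u \<sigma> m q = bin (Wn n) u @ rowu n G u @ hasN n G u @ bin (Wn n) m @ sig (Wn n) \<sigma> m @ Rst2 n G u @ q"
definition Tb :: "nat \<Rightarrow> (nat \<Rightarrow> nat \<Rightarrow> nat set) \<Rightarrow> nat \<Rightarrow> (nat \<Rightarrow> nat) \<Rightarrow> nat \<Rightarrow> bool list" where
  "Tb n R u \<sigma> m = concat (map (\<lambda>v. map (\<lambda>l. \<sigma> l \<in> R u v) [0..<m]) (filter (\<lambda>v. v \<noteq> u) [1..<n+1]))"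

lemma length_sig: "length (sig W \<sigma> m) = m * W"
  by (simp add: sig_def length_concat o_def sum_list_triv)

lemma sig_split:
  assumes "l < m"
  shows "sig W \<sigma> m = sig W \<sigma> l @ bin W (\<sigma> l) @ concat (map (\<lambda>l. bin W (\<sigma> l)) [Suc l..<m])"
proof -
  have "[0..<m] = [0..<l] @ l # [Suc l..<m]"
    using assms upt_add_eq_append[of 0 l "m - l"] upt_conv_Cons[of l m] by simp
  then show ?thesis by (simp add: sig_def del: upt_Suc)
qed

lemma nth_concat_blocks:
  assumes "\<forall>y\<in>set ys. length (F y) = m" "k < length ys" "l < m"
  shows "k * m + l < length (concat (map F ys)) \<and> concat (map F ys) ! (k * m + l) = F (ys ! k) ! l"
  using assms
proof (induction ys arbitrary: k)
  case (Cons y ys)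
  show ?case
  proof (cases k)
    case 0 then show ?thesis using Cons.prems by (simp add: nth_append)
  next
    case (Suc k')
    have "k' * m + l < length (concat (map F ys)) \<and> concat (map F ys) ! (k' * m + l) = F (ys ! k') ! l"
      using Cons Suc by auto
    moreover have "k * m + l = m + (k' * m + l)" using Suc by simp
    ultimately show ?thesis using Cons.prems Suc by (simp add: nth_append)
  qed
qed simp

lemma length_Tb: "1 \<le> u \<Longrightarrow> u \<le> n \<Longrightarrow> length (Tb n R u \<sigma> m) = (n - 1) * m"
  using length_filter_ne[of u n] by (simp add: Tb_def length_concat o_def sum_list_triv del: upt_Suc)

lemma Tb_nth:
  assumes u: "1 \<le> u" "u \<le> n" and v: "1 \<le> v" "v \<le> n" "v \<noteq> u" and l: "l < m"
  shows "posc u v * m + l < length (Tb n R u \<sigma> m) \<and> Tb n R u \<sigma> m ! (posc u v * m + l) = (\<sigma> l \<in> R u v)"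
proof -
  have f: "posc u v < length (filter (\<lambda>x. x \<noteq> u) [1..<Suc n])" "filter (\<lambda>x. x \<noteq> u) [1..<Suc n] ! posc u v = v"
    using filter_ne_nth[OF u v] length_filter_ne[OF u] by (simp_all add: posc_def)
  show ?thesis
    using nth_concat_blocks[of "filter (\<lambda>x. x \<noteq> u) [1..<Suc n]" "\<lambda>v. map (\<lambda>l. \<sigma> l \<in> R u v) [0..<m]" m "posc u v" l] f l
    unfolding Tb_def by simp
qed

lemma nthc_bcode_app:
  assumes "k < length ys"
  shows "nthc (bcode (xs @ ys @ zs)) (length xs + k) = (if ys ! k then 1 else 0)"
  using assms by (simp add: nth_append)

lemma dec2_correct:
  assumes G: "labeled_graph n G" and u: "1 \<le> u" "u \<le> n"
    and R: "full_info_sp_scheme n G R"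
    and m: "m \<le> n" and \<sigma>: "\<forall>l<m. 1 \<le> \<sigma> l \<and> \<sigma> l \<le> n"
    and cov: "\<forall>w. adj G u w \<longrightarrow> (\<exists>l<m. \<sigma> l = w)"
  shows "dec2 (bcode (Tb n R u \<sigma> m)) (bcode (p2 n G u \<sigma> m q)) (bcode (unary n)) = bcode (E n G)"
    and "qf (bcode (p2 n G u \<sigma> m q)) (bcode (unary n)) = bcode q"
    and "zf (bcode (p2 n G u \<sigma> m q)) (bcode (unary n)) = bcode (node_info n G u)"
proof -
  define W where "W = Wn n"
  define p where "p = bcode (p2 n G u \<sigma> m q)"
  define t where "t = bcode (Tb n R u \<sigma> m)"
  define pairs where "pairs = pairs_lex n"
  have ln: "lenc (bcode (unary n)) = n" by (simp add: unary_def)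
  have Wp: "n < 2 ^ W" using Wn_props[of n] by (simp add: W_def)
  have lrow: "length (rowu n G u) = n" by (simp add: rowu_def)
  have lhas: "length (hasN n G u) = n" by (simp add: hasN_def)
  have p2e: "p2 n G u \<sigma> m q = bin W u @ rowu n G u @ hasN n G u @ bin W m @ sig W \<sigma> m @ Rst2 n G u @ q"
    by (simp add: p2_def W_def)
  have hu: "binval p 0 W = u"
    unfolding p_def p2e using Wp u by (simp add: binval_bcode0)
  have hrb: "rbc p W x = (if adj G u x then 1 else 0)" if x: "1 \<le> x" "x \<le> n" for x
  proof -
    have "rbc p W x = nthc (bcode (bin W u @ rowu n G u @ (hasN n G u @ bin W m @ sig W \<sigma> m @ Rst2 n G u @ q))) (length (bin W u) + (x - 1))"
      unfolding rbc_def p_def p2e by simp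
    also have "\<dots> = (if rowu n G u ! (x - 1) then 1 else 0)"
      by (rule nthc_bcode_app) (use x lrow in simp)
    also have "rowu n G u ! (x - 1) = adj G u x" using x by (simp add: rowu_def nth_append del: upt_Suc)
    finally show ?thesis .
  qed
  have hhb: "hbc p W n x = (if \<exists>w. adj G u w \<and> adj G w x then 1 else 0)" if x: "1 \<le> x" "x \<le> n" for x
  proof -
    have "hbc p W n x = nthc (bcode ((bin W u @ rowu n G u) @ hasN n G u @ (bin W m @ sig W \<sigma> m @ Rst2 n G u @ q))) (length (bin W u @ rowu n G u) + (x - 1))"
      unfolding hbc_def p_def p2e using lrow by (simp add: add.assoc)
    also have "\<dots> = (if hasN n G u ! (x - 1) then 1 else 0)"
      by (rule nthc_bcode_app) (use x lhas in simp)
    also have "hasN n G u ! (x - 1) = (\<exists>w. adj G u w \<and> adj G w x)" using x by (simp add: hasN_def nth_append del: upt_Suc)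
    finally show ?thesis .
  qed
  have hm: "d2m p W n = m"
  proof -
    have "d2m p W n = binval (bcode ((bin W u @ rowu n G u @ hasN n G u) @ bin W m @ (sig W \<sigma> m @ Rst2 n G u @ q))) (length (bin W u @ rowu n G u @ hasN n G u)) W"
      unfolding d2m_def p_def p2e using lrow lhas by (simp add: mult_2)
    also have "\<dots> = m" by (rule binval_bcode) (use m Wp in simp)
    finally show ?thesis .
  qed
  have hsg: "sgc p W n l = \<sigma> l" if l: "l < m" for l
  proof -
    have "sgc p W n l = binval (bcode ((bin W u @ rowu n G u @ hasN n G u @ bin W m @ sig W \<sigma> l) @ bin W (\<sigma> l) @
       (concat (map (\<lambda>l. bin W (\<sigma> l)) [Suc l..<m]) @ Rst2 n G u @ q))) (length (bin W u @ rowu n G u @ hasN n G u @ bin W m @ sig W \<sigma> l)) W"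
    proof -
      have off: "2 * W + 2 * n + l * W = length (bin W u @ rowu n G u @ hasN n G u @ bin W m @ sig W \<sigma> l)"
        using lrow lhas by (simp add: length_sig)
      show ?thesis unfolding sgc_def off p_def p2e sig_split[OF l, of W \<sigma>] by simp
    qed
    also have "\<dots> = \<sigma> l" by (rule binval_bcode) (use \<sigma> l Wp in force)
    finally show ?thesis .
  qed
  have pairs_range: "1 \<le> fst x \<and> fst x < snd x \<and> snd x \<le> n" if "x \<in> set pairs" for x
    using that by (auto simp: pairs_def set_pairs_lex)
  have hPB: "PBc p W u (fst x) (snd x) = PB G u x" if x: "x \<in> set pairs" for x
    using pairs_range[OF x] hrb[of "fst x"] hrb[of "snd x"] by (auto simp: PBc_def PB_def)
  define P where "P = (\<lambda>x. PBc p W u (fst x) (snd x))"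
  define f where "f = (\<lambda>x. bitBc t p W u n (fst x) (snd x))"
  define g where "g = (\<lambda>x. adj G (fst x) (snd x))"
  have hmask: "d2mask p W u n = bcode (map P pairs)"
  proof -
    have "d2mask p W u n = bcode (concat (map (\<lambda>(i, j). [PBc p W u i j]) pairs))"
      unfolding d2mask_def pairs_def by (rule nestc_bcode) simp
    also have "\<dots> = bcode (map P pairs)" unfolding P_def split_def concat_map_single by (rule refl)
    finally show ?thesis .
  qed
  have hS: "d2S t p W u n = bcode (concat (map (\<lambda>x. if P x then [f x] else []) pairs))"
  proof -
    have "d2S t p W u n = bcode (concat (map (\<lambda>(i, j). if PBc p W u i j then [bitBc t p W u n i j] else []) pairs))"
      unfolding d2S_def pairs_def by (rule nestc_bcode) simp
    also have "\<dots> = bcode (concat (map (\<lambda>x. if P x then [f x] else []) pairs))"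
      unfolding P_def f_def split_def by (rule refl)
    finally show ?thesis .
  qed
  have Rst2e: "Rst2 n G u = concat (map (\<lambda>x. if P x then [] else [g x]) pairs)"
    unfolding Rst2_def pairs_def[symmetric] g_def
    by (rule arg_cong[where f=concat], rule map_cong[OF refl]) (simp add: P_def hPB)
  have hoff: "offR p W n = length (bin W u @ rowu n G u @ hasN n G u @ bin W m @ sig W \<sigma> m)"
    unfolding offR_def hm using lrow lhas by (simp add: length_sig)
  have hlenR: "lenR p W u n = length (Rst2 n G u)"
  proof -
    have "lenR p W u n = length pairs - length (filter P pairs)"
      unfolding lenR_def hmask by (simp add: filter_map o_def)
    also have "\<dots> = length (filter (\<lambda>x. \<not> P x) pairs)"
      using sum_length_filter_compl[of P pairs] by simp
    also have "\<dots> = length (Rst2 n G u)" unfolding Rst2e concat_map_if2 by simp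
    finally show ?thesis .
  qed
  have hR: "d2R p W u n = bcode (Rst2 n G u)"
    unfolding d2R_def hoff hlenR unfolding p_def p2e by simp
  show "qf (bcode (p2 n G u \<sigma> m q)) (bcode (unary n)) = bcode q"
    unfolding qf_def ln W_def[symmetric] p_def[symmetric] hu d2q_def hoff hlenR
    unfolding p_def p2e by simp
  show "zf (bcode (p2 n G u \<sigma> m q)) (bcode (unary n)) = bcode (node_info n G u)"
  proof -
    have "takec n (dropc W p) = bcode (rowu n G u)"
      unfolding p_def p2e using takec_bcode[of "rowu n G u"] lrow by simp
    then show ?thesis
      unfolding zf_def ln W_def[symmetric] p_def[symmetric] hu
      by (simp add: tupc3_bcode node_info_def rowu_def)
  qed
  have hf: "f x = g x" if x: "x \<in> set pairs" "P x" for x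
  proof -
    obtain i j where ij: "x = (i, j)" "1 \<le> i" "i < j" "j \<le> n" using pairs_range[OF x(1)] by (cases x) auto
    have pb: "PB G u (i, j)" using x hPB[OF x(1)] ij unfolding P_def by simp
    define w where "w = (if adj G u i then i else j)"
    define v where "v = (if adj G u i then j else i)"
    have wv: "adj G u w" "v \<noteq> u" "\<not> adj G u v" "1 \<le> v" "v \<le> n" "adj G i j = adj G w v"
      using pb ij by (auto simp: PB_def w_def v_def adj_sym)
    have hwB: "wB p W i j = w" and hvB: "vB p W i j = v"
      using hrb[of i] ij by (auto simp: wB_def vB_def w_def v_def)
    have tb: "nthc t (posc u v * m + l) = (if \<sigma> l \<in> R u v then 1 else 0)" if "l < m" for l
      using Tb_nth[OF u wv(4,5,2) that, of R \<sigma>] unfolding t_def by simp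
    have Ruv: "R u v = {w. on_shortest_path G u v w}"
      using R u wv by (auto simp: full_info_sp_scheme_def)
    have "f x = ((\<exists>w'. adj G u w' \<and> adj G w' v) \<and> (\<exists>l<m. \<sigma> l = w \<and> \<sigma> l \<in> R u v))"
      unfolding f_def ij fst_conv snd_conv bitBc_def hwB hvB hm hhb[OF wv(4,5)]
      using tb hsg by (auto simp: ij split: if_splits)
    also have "\<dots> = ((\<exists>w'. adj G u w' \<and> adj G w' v) \<and> on_shortest_path G u v w)"
      using cov wv(1) Ruv by auto
    also have "\<dots> = adj G w v" by (rule key_sp) (use wv in auto)
    finally show ?thesis using wv ij by (simp add: g_def)
  qed
  have "dec2 t p (bcode (unary n)) = bcode (map (\<lambda>x. if P x then f x else g x) pairs)"
    unfolding dec2_def ln W_def[symmetric] hu dec2'_def hmask hS hR Rst2e by (rule mergec_bcode)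
  also have "map (\<lambda>x. if P x then f x else g x) pairs = E n G"
    unfolding E_adj[OF G] pairs_def[symmetric] by (rule map_cong[OF refl]) (use hf in \<open>auto simp: g_def\<close>)
  finally show "dec2 (bcode (Tb n R u \<sigma> m)) (bcode (p2 n G u \<sigma> m q)) (bcode (unary n)) = bcode (E n G)"
    unfolding t_def p_def .
qed

definition Nu :: "nat \<Rightarrow> graph \<Rightarrow> nat \<Rightarrow> nat set" where
  "Nu n G u = {w \<in> {1..n}. adj G u w}"
definition Mu :: "nat \<Rightarrow> graph \<Rightarrow> nat \<Rightarrow> nat set" where
  "Mu n G u = {v \<in> {1..n}. v \<noteq> u \<and> \<not> adj G u v}"

lemma deg_card:
  assumes G: "labeled_graph n G" and u: "1 \<le> u" "u \<le> n"
  shows "deg n G u = card (Nu n G u)"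
proof -
  have "deg n G u = length (filter (adj G u) (filter (\<lambda>x. x \<noteq> u) [1..<Suc n]))"
    by (simp add: deg_def row1_def filter_map o_def)
  also have "\<dots> = card {x \<in> set (filter (\<lambda>x. x \<noteq> u) [1..<Suc n]). adj G u x}"
    by (rule length_filter_distinct) simp
  also have "{x \<in> set (filter (\<lambda>x. x \<noteq> u) [1..<Suc n]). adj G u x} = Nu n G u"
  proof (rule set_eqI)
    fix x show "x \<in> {x \<in> set (filter (\<lambda>x. x \<noteq> u) [1..<Suc n]). adj G u x} \<longleftrightarrow> x \<in> Nu n G u"
      using labeled_adj_range[OF G, of u x] by (auto simp: Nu_def simp del: upt_Suc)
  qed
  finally show ?thesis .
qed

lemma card_Mu:
  assumes G: "labeled_graph n G" and u: "1 \<le> u" "u \<le> n"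
  shows "card (Mu n G u) = n - 1 - card (Nu n G u)"
proof -
  have "{1..n} - {u} = Nu n G u \<union> Mu n G u" using labeled_adj_range[OF G, of u] by (auto simp: Nu_def Mu_def)
  moreover have "Nu n G u \<inter> Mu n G u = {}" by (auto simp: Nu_def Mu_def)
  ultimately have "card ({1..n} - {u}) = card (Nu n G u) + card (Mu n G u)"
    by (metis card_Un_disjoint finite_Diff finite_atLeastAtMost finite_Un)
  thus ?thesis using u by simp
qed

lemma length_Rst2:
  assumes G: "labeled_graph n G" and u: "1 \<le> u" "u \<le> n"
  shows "length (Rst2 n G u) = n * (n - 1) div 2 - deg n G u * (n - 1 - deg n G u)"
proof -
  have "{x \<in> set (pairs_lex n). PB G u x} =
     {x \<in> set (pairs_lex n). (fst x \<in> Nu n G u \<and> snd x \<in> Mu n G u) \<or> (fst x \<in> Mu n G u \<and> snd x \<in> Nu n G u)}"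
    using labeled_adj_range[OF G, of u] by (auto simp: PB_def Nu_def Mu_def set_pairs_lex)
  also have "card \<dots> = card (Nu n G u) * card (Mu n G u)"
    by (rule card_cross_pairs) (auto simp: Nu_def Mu_def)
  finally have c: "card {x \<in> set (pairs_lex n). PB G u x} = deg n G u * (n - 1 - deg n G u)"
    using card_Mu[OF G u] deg_card[OF G u] by simp
  show ?thesis unfolding Rst2_def by (simp add: length_Rst_gen c)
qed

lemma length_p2:
  "length (p2 n G u \<sigma> m q) = 2 * Wn n + 2 * n + m * Wn n + length (Rst2 n G u) + length q"
  by (simp add: p2_def rowu_def hasN_def length_sig)

section \<open>Kolmogorov complexity basics\<close>

lemma KC_le: "U q y = Some x \<Longrightarrow> KC U x y \<le> length q"
  unfolding KC_def by (rule Least_le) blast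

lemma KC_ex: assumes "U q0 y = Some x" shows "\<exists>q. U q y = Some x \<and> length q = KC U x y"
proof -
  have "\<exists>p. length p = (LEAST m. \<exists>p. length p = m \<and> U p y = Some x) \<and> U p y = Some x"
    by (rule LeastI_ex) (use assms in blast)
  then show ?thesis unfolding KC_def by blast
qed

lemma universal_prog:
  assumes "universal U" shows "\<exists>q. U q y = Some x"
proof -
  have pr: "partrec2 (phiR (constr (bcode x)))" by (rule partrec2_phiR)
  obtain c where c: "\<forall>p y z. phiR (constr (bcode x)) p y = Some z \<longrightarrow> (\<exists>q. U q y = Some z \<and> length q \<le> length p + c)"
    using assms pr unfolding universal_def by blast
  have "phiR (constr (bcode x)) [] y = Some x" by (rule phiR_eval) (rule eval_constr)
  with c show ?thesis by blast
qed

lemma pc_recf: "pc k f \<Longrightarrow> \<exists>r. \<forall>xs. length xs = k \<longrightarrow> eval r xs (f xs)"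
  by (simp add: pc_def)

lemma bound1:
  assumes "universal U"
  shows "\<exists>c1. \<forall>n G u. labeled_graph n G \<longrightarrow> 1 \<le> u \<longrightarrow> u \<le> n \<longrightarrow>
     KC U (E n G) (unary n) \<le> length (p1 n G u) + c1"
proof -
  obtain r where r: "\<forall>xs. length xs = 2 \<longrightarrow> eval r xs (dec1 (xs!0) (xs!1))"
    using pc_recf[OF pc_dec1] by blast
  obtain c where c: "\<forall>p y z. phiR r p y = Some z \<longrightarrow> (\<exists>q. U q y = Some z \<and> length q \<le> length p + c)"
    using assms partrec2_phiR[of r] unfolding universal_def by blast
  have "KC U (E n G) (unary n) \<le> length (p1 n G u) + c" if "labeled_graph n G" "1 \<le> u" "u \<le> n" for n G u
  proof -
    have "eval r [bcode (p1 n G u), bcode (unary n)] (bcode (E n G))"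
      using r[rule_format, of "[bcode (p1 n G u), bcode (unary n)]"] dec1_correct[OF that] by simp
    then have "phiR r (p1 n G u) (unary n) = Some (E n G)" by (rule phiR_eval)
    then obtain q where "U q (unary n) = Some (E n G)" "length q \<le> length (p1 n G u) + c" using c by blast
    then show ?thesis using KC_le by fastforce
  qed
  then show ?thesis by blast
qed

lemma bound2:
  assumes "universal U"
  shows "\<exists>c2. \<forall>n G u R \<sigma> m. labeled_graph n G \<longrightarrow> 1 \<le> u \<longrightarrow> u \<le> n \<longrightarrow> full_info_sp_scheme n G R \<longrightarrow>
     m \<le> n \<longrightarrow> (\<forall>l<m. 1 \<le> \<sigma> l \<and> \<sigma> l \<le> n) \<longrightarrow> (\<forall>w. adj G u w \<longrightarrow> (\<exists>l<m. \<sigma> l = w)) \<longrightarrow>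
     KC U (E n G) (unary n) \<le> 2 * Wn n + 2 * n + m * Wn n + length (Rst2 n G u)
        + KC U (Tb n R u \<sigma> m) (node_info n G u) + c2"
proof -
  obtain fU where fU: "\<forall>p y z. U p y = Some z \<longleftrightarrow> eval fU [bcode p, bcode y] (bcode z)"
    using assms unfolding universal_def partrec2_def by blast
  obtain rD where rD: "\<forall>xs. length xs = 3 \<longrightarrow> eval rD xs (dec2 (xs!0) (xs!1) (xs!2))"
    using pc_recf[OF pc_dec2] by blast
  obtain rQ where rQ: "\<forall>xs. length xs = 2 \<longrightarrow> eval rQ xs (qf (xs!0) (xs!1))"
    using pc_recf[OF pc_qf] by blast
  obtain rZ where rZ: "\<forall>xs. length xs = 2 \<longrightarrow> eval rZ xs (zf (xs!0) (xs!1))"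
    using pc_recf[OF pc_zf] by blast
  define F where "F = Cn rD [Cn fU [rQ, rZ], Id 0, Id 1]"
  have evF: "eval F [a, b] (dec2 t a b)" if "eval fU [qf a b, zf a b] t" for a b t
  proof -
    have h1: "eval (Cn fU [rQ, rZ]) [a, b] t"
      by (rule ev_Cn[where ys="[qf a b, zf a b]"]) (use rQ[rule_format, of "[a, b]"] rZ[rule_format, of "[a, b]"] that in auto)
    have h2: "eval rD [t, a, b] (dec2 t a b)" using rD[rule_format, of "[t, a, b]"] by simp
    have h3: "eval (Id 0) [a, b] a" using ev_Id[of 0 "[a, b]"] by simp
    have h4: "eval (Id 1) [a, b] b" using ev_Id[of 1 "[a, b]"] by simp
    show ?thesis unfolding F_def
      by (rule ev_Cn[where ys="[t, a, b]"]) (use h1 h2 h3 h4 in auto)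
  qed
  obtain c where c: "\<forall>p y z. phiR F p y = Some z \<longrightarrow> (\<exists>q. U q y = Some z \<and> length q \<le> length p + c)"
    using assms partrec2_phiR[of F] unfolding universal_def by blast
  have "KC U (E n G) (unary n) \<le> 2 * Wn n + 2 * n + m * Wn n + length (Rst2 n G u)
        + KC U (Tb n R u \<sigma> m) (node_info n G u) + c"
    if h: "labeled_graph n G" "1 \<le> u" "u \<le> n" "full_info_sp_scheme n G R" "m \<le> n"
       "\<forall>l<m. 1 \<le> \<sigma> l \<and> \<sigma> l \<le> n" "\<forall>w. adj G u w \<longrightarrow> (\<exists>l<m. \<sigma> l = w)" for n G u R \<sigma> m
  proof -
    obtain q0 where q0: "U q0 (node_info n G u) = Some (Tb n R u \<sigma> m)"
      using universal_prog[OF assms] by blast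
    obtain q where q: "U q (node_info n G u) = Some (Tb n R u \<sigma> m)" "length q = KC U (Tb n R u \<sigma> m) (node_info n G u)"
      using KC_ex[of U q0 "node_info n G u" "Tb n R u \<sigma> m", OF q0] by blast
    note dc = dec2_correct[OF h, of q]
    have "eval fU [bcode q, bcode (node_info n G u)] (bcode (Tb n R u \<sigma> m))"
      using fU q(1) by blast
    then have "eval fU [qf (bcode (p2 n G u \<sigma> m q)) (bcode (unary n)), zf (bcode (p2 n G u \<sigma> m q)) (bcode (unary n))]
        (bcode (Tb n R u \<sigma> m))"
      unfolding dc(2,3) .
    from evF[OF this] dc(1) have "eval F [bcode (p2 n G u \<sigma> m q), bcode (unary n)] (bcode (E n G))" by simp
    then have "phiR F (p2 n G u \<sigma> m q) (unary n) = Some (E n G)" by (rule phiR_eval)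
    then obtain q' where "U q' (unary n) = Some (E n G)" "length q' \<le> length (p2 n G u \<sigma> m q) + c" using c by blast
    then have "KC U (E n G) (unary n) \<le> length (p2 n G u \<sigma> m q) + c" using KC_le by fastforce
    then show ?thesis unfolding length_p2 q(2) .
  qed
  then show ?thesis by blast
qed

section \<open>Entropy bound for binomial coefficients\<close>

lemma sum_pow_lists:
  fixes x :: real
  shows "(\<Sum>xs\<in>{xs::bool list. length xs = D}. x ^ length (filter id xs)) = (1 + x) ^ D"
proof (induction D)
  case 0
  have "{xs::bool list. length xs = 0} = {[]}" by auto
  then show ?case by simp
next
  case (Suc D)
  define A where "A = {xs::bool list. length xs = D}"
  have fin: "finite A" unfolding A_def using finite_lists_length_eq[of "UNIV::bool set" D] by simp
  have eq: "{xs::bool list. length xs = Suc D} = Cons True ` A \<union> Cons False ` A"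
  proof (rule set_eqI, rule iffI)
    fix xs :: "bool list" assume "xs \<in> {xs. length xs = Suc D}"
    then obtain b ys where "xs = b # ys" "length ys = D" by (auto simp: length_Suc_conv)
    then show "xs \<in> Cons True ` A \<union> Cons False ` A" by (cases b) (auto simp: A_def)
  qed (auto simp: A_def)
  have "(\<Sum>xs\<in>{xs::bool list. length xs = Suc D}. x ^ length (filter id xs))
      = (\<Sum>xs\<in>Cons True ` A. x ^ length (filter id xs)) + (\<Sum>xs\<in>Cons False ` A. x ^ length (filter id xs))"
    unfolding eq by (rule sum.union_disjoint) (use fin in auto)
  also have "(\<Sum>xs\<in>Cons True ` A. x ^ length (filter id xs)) = (\<Sum>ys\<in>A. x * x ^ length (filter id ys))"
    by (subst sum.reindex) (auto simp: inj_on_def)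
  also have "(\<Sum>xs\<in>Cons False ` A. x ^ length (filter id xs)) = (\<Sum>ys\<in>A. x ^ length (filter id ys))"
    by (subst sum.reindex) (auto simp: inj_on_def)
  also have "(\<Sum>ys\<in>A. x * x ^ length (filter id ys)) = x * (\<Sum>ys\<in>A. x ^ length (filter id ys))"
    by (rule sum_distrib_left[symmetric])
  finally have e: "(\<Sum>xs\<in>{xs::bool list. length xs = Suc D}. x ^ length (filter id xs)) =
     x * (\<Sum>ys\<in>A. x ^ length (filter id ys)) + (\<Sum>ys\<in>A. x ^ length (filter id ys))" .
  have S: "(\<Sum>ys\<in>A. x ^ length (filter id ys)) = (1 + x) ^ D" using Suc.IH unfolding A_def .
  show ?case unfolding e S by (simp add: algebra_simps)
qed

lemma card_weight_exp:
  fixes h :: real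
  shows "real (card {xs::bool list. length xs = D \<and> length (filter id xs) = d}) * exp h ^ d \<le> (1 + exp h) ^ D"
proof -
  let ?S = "{xs::bool list. length xs = D \<and> length (filter id xs) = d}"
  let ?A = "{xs::bool list. length xs = D}"
  have fin: "finite ?A" using finite_lists_length_eq[of "UNIV::bool set" D] by simp
  have "real (card ?S) * exp h ^ d = (\<Sum>xs\<in>?S. exp h ^ length (filter id xs))" by simp
  also have "\<dots> \<le> (\<Sum>xs\<in>?A. exp h ^ length (filter id xs))"
    by (rule sum_mono2) (use fin in auto)
  also have "\<dots> = (1 + exp h) ^ D" by (rule sum_pow_lists)
  finally show ?thesis .
qed

lemma half_cosh: "(1 + exp h) / 2 \<le> exp (h / 2 + h\<^sup>2 / 8 :: real)"
proof -
  have pos: "(1 + exp t) / 2 \<le> exp (t / 2 + t\<^sup>2 / 8)" if t: "t \<ge> 0" for t :: real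
  proof -
    have h1: "- t * (1/2) + ln (1 + (1/2) * (exp t - 1)) \<le> t\<^sup>2 / 8"
      by (rule Hoeffdings_lemma_aux) (use t in auto)
    have eq: "1 + (1/2) * (exp t - 1) = (1 + exp t) / 2" by (simp add: field_simps)
    have "ln ((1 + exp t) / 2) \<le> t / 2 + t\<^sup>2 / 8" using h1 unfolding eq by linarith
    then have "exp (ln ((1 + exp t) / 2)) \<le> exp (t / 2 + t\<^sup>2 / 8)" by simp
    moreover have "exp (ln ((1 + exp t) / 2)) = (1 + exp t) / 2"
      by (rule exp_ln) (simp add: add_pos_pos)
    ultimately show ?thesis by simp
  qed
  show ?thesis
  proof (cases "h \<ge> 0")
    case True then show ?thesis by (rule pos)
  next
    case False
    have a: "(1 + exp (-h)) / 2 \<le> exp (-h / 2 + h\<^sup>2 / 8)" using pos[of "-h"] False by simp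
    have "(1 + exp h) / 2 = exp h * ((1 + exp (-h)) / 2)"
      by (simp add: field_simps exp_minus)
    also have "\<dots> \<le> exp h * exp (-h / 2 + h\<^sup>2 / 8)"
      by (rule mult_left_mono[OF a]) simp
    also have "\<dots> = exp (h / 2 + h\<^sup>2 / 8)"
      by (simp add: exp_add[symmetric])
    finally show ?thesis .
  qed
qed

lemma card_weight_bound:
  assumes D: "D > 0"
  shows "real (card {xs::bool list. length xs = D \<and> length (filter id xs) = d})
     \<le> 2 ^ D * exp (- 2 * (real d - real D / 2)\<^sup>2 / real D)"
proof -
  define s where "s = real d - real D / 2"
  define h where "h = 4 * s / real D"
  define c where "c = real (card {xs::bool list. length xs = D \<and> length (filter id xs) = d})"
  have "c * exp h ^ d \<le> (1 + exp h) ^ D" unfolding c_def by (rule card_weight_exp)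
  also have "(1 + exp h) ^ D = 2 ^ D * ((1 + exp h) / 2) ^ D" by (simp add: power_divide)
  also have "\<dots> \<le> 2 ^ D * exp (h / 2 + h\<^sup>2 / 8) ^ D"
    by (intro mult_left_mono power_mono half_cosh) (auto intro: add_nonneg_nonneg)
  finally have "c * exp (h * d) \<le> 2 ^ D * exp (D * (h / 2 + h\<^sup>2 / 8))"
    by (simp add: exp_of_nat_mult[symmetric] mult.commute)
  then have "c \<le> 2 ^ D * (exp (D * (h / 2 + h\<^sup>2 / 8)) / exp (h * d))"
    by (simp add: field_simps)
  also have "exp (D * (h / 2 + h\<^sup>2 / 8)) / exp (h * d) = exp (D * (h / 2 + h\<^sup>2 / 8) - h * d)"
    by (simp add: exp_diff)
  also have "D * (h / 2 + h\<^sup>2 / 8) - h * d = - 2 * s\<^sup>2 / real D"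
    using D unfolding h_def s_def by (simp add: field_simps power2_eq_square)
  finally show ?thesis by (simp add: c_def s_def mult.assoc)
qed

lemma deg_entropy:
  assumes D: "D > 0" and c: "c = card {xs::bool list. length xs = D \<and> length (filter id xs) = d}"
    and c1: "c \<ge> 1" and L: "L = 0 \<or> 2 ^ (L - 1) < c" and dD: "d \<le> D"
  shows "2 * (real d - real D / 2)\<^sup>2 / real D \<le> real D - real L + 1"
proof -
  define X where "X = 2 * (real d - real D / 2)\<^sup>2 / real D"
  have X0: "X \<ge> 0" unfolding X_def using D by simp
  show ?thesis
  proof (cases "L = 0")
    case True
    have dr: "real d \<le> real D" using dD by simp
    have "\<bar>real d - real D / 2\<bar> \<le> real D / 2" using dr by (intro abs_leI) auto
    then have "\<bar>real d - real D / 2\<bar>\<^sup>2 \<le> (real D / 2)\<^sup>2"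
      by (intro power_mono) auto
    then have "(real d - real D / 2)\<^sup>2 \<le> (real D / 2)\<^sup>2" by simp
    then have "X \<le> 2 * (real D / 2)\<^sup>2 / real D" unfolding X_def
      by (intro divide_right_mono) (use D in auto)
    also have "\<dots> = real D / 2" using D by (simp add: power2_eq_square field_simps)
    finally show ?thesis using True by (simp add: X_def)
  next
    case False
    then have lt: "2 ^ (L - 1) < c" using L by simp
    have "real c \<le> 2 ^ D * exp (- X)" using card_weight_bound[OF D, of d] unfolding c X_def by simp
    with lt have "(2::real) ^ (L - 1) < 2 ^ D * exp (- X)"
      by (metis of_nat_less_iff of_nat_numeral of_nat_power order_less_le_trans)
    then have "ln ((2::real) ^ (L - 1)) < ln (2 ^ D * exp (- X))"
      by (subst ln_less_cancel_iff) auto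
    then have "real (L - 1) * ln 2 < real D * ln 2 - X"
      by (simp add: ln_mult ln_realpow)
    then have "X < (real D - real (L - 1)) * ln 2" by (simp add: algebra_simps)
    moreover have "real D - real (L - 1) > 0"
      using \<open>X < _\<close> X0 by (smt (verit) ln_gt_zero mult_nonpos_nonneg)
    moreover have "ln (2::real) \<le> 1" using ln_le_minus_one[of 2] by simp
    ultimately have "X \<le> real D - real (L - 1)"
      by (smt (verit) mult_left_le)
    then show ?thesis using False by (simp add: X_def of_nat_diff)
  qed
qed

lemma deg_prod_le:
  assumes G: "labeled_graph n G" and u: "1 \<le> u" "u \<le> n"
  shows "deg n G u * (n - 1 - deg n G u) \<le> n * (n - 1) div 2"
proof -
  have "card {x \<in> set (pairs_lex n). PB G u x} \<le> card (set (pairs_lex n))"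
    by (rule card_mono) auto
  also have "\<dots> = n * (n - 1) div 2" using distinct_card[OF distinct_pairs_lex] length_pairs_lex by simp
  finally have "card {x \<in> set (pairs_lex n). PB G u x} \<le> n * (n - 1) div 2" .
  moreover have "{x \<in> set (pairs_lex n). PB G u x} =
     {x \<in> set (pairs_lex n). (fst x \<in> Nu n G u \<and> snd x \<in> Mu n G u) \<or> (fst x \<in> Mu n G u \<and> snd x \<in> Nu n G u)}"
    using labeled_adj_range[OF G, of u] by (auto simp: PB_def Nu_def Mu_def set_pairs_lex)
  moreover have "card {x \<in> set (pairs_lex n). (fst x \<in> Nu n G u \<and> snd x \<in> Mu n G u) \<or> (fst x \<in> Mu n G u \<and> snd x \<in> Nu n G u)}
     = card (Nu n G u) * card (Mu n G u)"
    by (rule card_cross_pairs) (auto simp: Nu_def Mu_def)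
  ultimately show ?thesis using card_Mu[OF G u] deg_card[OF G u] by simp
qed

lemma N_ge: "(n::nat) - 1 \<le> n * (n - 1) div 2"
proof (cases "n \<ge> 2")
  case True
  then have "2 * (n - 1) \<le> n * (n - 1)" by (intro mult_right_mono) auto
  then show ?thesis by linarith
next
  case False then have "n - 1 = 0" by simp
  then show ?thesis by simp
qed

lemma core_bound:
  assumes U: "universal U"
  obtains c1 c2 :: nat where
    "\<And>n G R u \<sigma> m. random_graph U \<delta> n G \<Longrightarrow> full_info_sp_scheme n G R \<Longrightarrow> 1 \<le> u \<Longrightarrow> u \<le> n \<Longrightarrow>
      m \<le> n \<Longrightarrow> (\<forall>l<m. 1 \<le> \<sigma> l \<and> \<sigma> l \<le> n) \<Longrightarrow> (\<forall>w. adj G u w \<longrightarrow> (\<exists>l<m. \<sigma> l = w)) \<Longrightarrow>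
      real (KC U (Tb n R u \<sigma> m) (node_info n G u)) \<ge> real n ^ 2 / 4 -
        (real n * \<bar>\<delta> n\<bar> + 2 * (real n * real (Wn n)) + real n * (real c1 + 3) + \<bar>\<delta> n\<bar> + real (Wn n) * 2 + (real c2 + 1))"
proof -
  obtain c1 where c1: "\<forall>n G u. labeled_graph n G \<longrightarrow> 1 \<le> u \<longrightarrow> u \<le> n \<longrightarrow>
     KC U (E n G) (unary n) \<le> length (p1 n G u) + c1" using bound1[OF U] by blast
  obtain c2 where c2: "\<forall>n G u R \<sigma> m. labeled_graph n G \<longrightarrow> 1 \<le> u \<longrightarrow> u \<le> n \<longrightarrow> full_info_sp_scheme n G R \<longrightarrow>
     m \<le> n \<longrightarrow> (\<forall>l<m. 1 \<le> \<sigma> l \<and> \<sigma> l \<le> n) \<longrightarrow> (\<forall>w. adj G u w \<longrightarrow> (\<exists>l<m. \<sigma> l = w)) \<longrightarrow>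
     KC U (E n G) (unary n) \<le> 2 * Wn n + 2 * n + m * Wn n + length (Rst2 n G u)
        + KC U (Tb n R u \<sigma> m) (node_info n G u) + c2" using bound2[OF U] by blast
  show ?thesis
  proof (rule that[of c1 c2])
    fix n G R u \<sigma> m
    assume rg: "random_graph U \<delta> n G" and R: "full_info_sp_scheme n G R" and u: "1 \<le> u" "u \<le> n"
      and m: "m \<le> n" and \<sigma>: "\<forall>l<m. 1 \<le> \<sigma> l \<and> \<sigma> l \<le> n" and cov: "\<forall>w. adj G u w \<longrightarrow> (\<exists>l<m. \<sigma> l = w)"
    have G: "labeled_graph n G" using rg by (simp add: random_graph_def)
    define N where "N = n * (n - 1) div 2"
    define W where "W = Wn n"
    define d where "d = deg n G u"
    define D where "D = n - 1"
    define L where "L = L1 n G u"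
    define K where "K = KC U (Tb n R u \<sigma> m) (node_info n G u)"
    define KE where "KE = KC U (E n G) (unary n)"
    have dD: "d \<le> D" using deg_le[OF u] by (simp add: d_def D_def)
    have rnd: "real KE \<ge> real N - \<delta> n" using rg by (simp add: random_graph_def KE_def N_def)
    have NL: "n - 1 \<le> N" using N_ge by (simp add: N_def)
    have "KE \<le> length (p1 n G u) + c1" using c1[rule_format, of n G u] G u unfolding KE_def by blast
    then have b1: "KE \<le> 2 * W + L + (N - (n - 1)) + c1"
      unfolding length_p1[OF u] W_def L_def N_def .
    have prodle: "d * (D - d) \<le> N" using deg_prod_le[OF G u] by (simp add: d_def D_def N_def)
    have "KE \<le> 2 * W + 2 * n + m * W + length (Rst2 n G u) + K + c2"
      using c2[rule_format, of n G u R m \<sigma>] G u R m \<sigma> cov unfolding KE_def K_def W_def by blast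
    then have b2: "KE \<le> 2 * W + 2 * n + m * W + (N - d * (D - d)) + K + c2"
      unfolding length_Rst2[OF G u] N_def d_def D_def .
    define X where "X = \<delta> n + 2 * real W + real c1 + 1"
    have DL: "real D - real L + 1 \<le> X"
    proof -
      have "real KE \<le> 2 * real W + real L + (real N - real (n - 1)) + real c1"
        using b1 NL by (simp add: of_nat_diff)
      then show ?thesis using rnd by (simp add: X_def D_def)
    qed
    define s where "s = real d - real D / 2"
    have s2: "s\<^sup>2 \<le> real D * X / 2"
    proof (cases "D = 0")
      case True then have "d = 0" using dD by simp
      then show ?thesis using True by (simp add: s_def)
    next
      case False
      then have Dp: "D > 0" by simp
      have valid: "validc D d (bcode (row1 n G u))"
        by (simp add: validc_bcode length_row1[OF u] d_def deg_def D_def)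
      define c where "c = cntc D d"
      have c1': "c \<ge> 1" using rank_less_cnt[OF valid] by (simp add: c_def)
      have Lp: "L = 0 \<or> 2 ^ (L - 1) < c" using Lc_props[of c] by (simp add: L_def L1_def c_def d_def D_def)
      have "2 * s\<^sup>2 / real D \<le> real D - real L + 1"
        unfolding s_def by (rule deg_entropy[OF Dp cntc_card[of D d] _ _ dD]) (use c1' Lp in \<open>simp_all add: c_def\<close>)
      with DL have "2 * s\<^sup>2 / real D \<le> X" by linarith
      then show ?thesis using Dp by (simp add: field_simps)
    qed
    have prod_eq: "real (d * (D - d)) = real D ^ 2 / 4 - s\<^sup>2"
      using dD by (simp add: s_def of_nat_diff power2_eq_square field_simps)
    have main: "real K \<ge> real (d * (D - d)) - \<delta> n - 2 * real W - 2 * real n - real m * real W - real c2"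
    proof -
      have "real KE \<le> real (2 * W + 2 * n + m * W + (N - d * (D - d)) + K + c2)"
        by (rule of_nat_mono[OF b2])
      also have "\<dots> = 2 * real W + 2 * real n + real m * real W + (real N - real (d * (D - d))) + real K + real c2"
        using prodle by (simp add: of_nat_diff)
      finally have "real KE \<le> 2 * real W + 2 * real n + real m * real W + (real N - real (d * (D - d))) + real K + real c2" .
      then show ?thesis using rnd by linarith
    qed
    have Dn: "real D ^ 2 / 4 \<ge> real n ^ 2 / 4 - real n / 2"
    proof (cases n)
      case (Suc k) then show ?thesis by (simp add: D_def power2_eq_square field_simps)
    qed (simp add: D_def)
    have DX: "real D * X \<le> real n * \<bar>\<delta> n\<bar> + 2 * (real n * real W) + real n * (real c1 + 1)"
    proof (cases "X \<ge> 0")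
      case True
      have "real D * X \<le> real n * X" using True by (intro mult_right_mono) (auto simp: D_def)
      also have "\<dots> = real n * \<delta> n + 2 * (real n * real W) + real n * (real c1 + 1)"
        by (simp add: X_def algebra_simps)
      also have "\<dots> \<le> real n * \<bar>\<delta> n\<bar> + 2 * (real n * real W) + real n * (real c1 + 1)"
        by (intro add_right_mono mult_left_mono) auto
      finally show ?thesis .
    next
      case False
      then have "real D * X \<le> 0" by (simp add: mult_nonneg_nonpos)
      also have "0 \<le> real n * \<bar>\<delta> n\<bar> + 2 * (real n * real W) + real n * (real c1 + 1)" by simp
      finally show ?thesis .
    qed
    have mW: "real m * real W \<le> real n * real W" using m by (intro mult_right_mono) auto
    have c1n: "real n * (real c1 + 1) / 2 + 5 * real n / 2 \<le> real n * (real c1 + 3)"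
      by (simp add: field_simps)
    have ad: "\<delta> n \<le> \<bar>\<delta> n\<bar>" by simp
    have nd: "0 \<le> real n * \<bar>\<delta> n\<bar>" by simp
    show "real (KC U (Tb n R u \<sigma> m) (node_info n G u)) \<ge> real n ^ 2 / 4 -
        (real n * \<bar>\<delta> n\<bar> + 2 * (real n * real (Wn n)) + real n * (real c1 + 3) + \<bar>\<delta> n\<bar> + real (Wn n) * 2 + (real c2 + 1))"
      unfolding K_def[symmetric] W_def[symmetric]
      using main prod_eq s2 Dn DX mW c1n ad nd by linarith
  qed
qed

lemma Wn_log: assumes "n \<ge> 1" shows "real (Wn n) \<le> log 2 (real n) + 1"
proof -
  have l0: "log 2 (real n) \<ge> 0" using assms by simp
  have wp: "Wn n = 0 \<or> 2 ^ (Wn n - 1) \<le> n" using Wn_props[of n] by simp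
  then consider "Wn n = 0" | "2 ^ (Wn n - 1) \<le> n" by (cases "Wn n = 0") auto
  then show ?thesis
  proof cases
    case 1 then show ?thesis using l0 by simp
  next
    case 2
    then have "real (2 ^ (Wn n - 1)) \<le> real n" by (rule of_nat_mono)
    then have "(2::real) ^ (Wn n - 1) \<le> real n" by simp
    then have "log 2 ((2::real) ^ (Wn n - 1)) \<le> log 2 (real n)"
      using assms by (subst log_le_cancel_iff) auto
    then have "real (Wn n - 1) \<le> log 2 (real n)" by (simp add: log_nat_power)
    then show ?thesis by linarith
  qed
qed

lemma Wn_smallo: "(\<lambda>n. real (Wn n)) \<in> o(\<lambda>n. real n)"
proof (rule landau_o.big_small_trans)
  show "(\<lambda>n. real (Wn n)) \<in> O(\<lambda>n. log 2 (real n) + 1)"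
  proof (rule bigoI[where c=1])
    show "\<forall>\<^sub>F n in at_top. norm (real (Wn n)) \<le> 1 * norm (log 2 (real n) + 1)"
    proof (rule eventually_mono[OF eventually_ge_at_top[of 1]])
      fix n :: nat assume n: "1 \<le> n"
      have "log 2 (real n) \<ge> 0" using n by simp
      then show "norm (real (Wn n)) \<le> 1 * norm (log 2 (real n) + 1)" using Wn_log[OF n] by simp
    qed
  qed
  show "(\<lambda>n. log 2 (real n) + 1) \<in> o(\<lambda>n. real n)" by real_asymp
qed

lemma beta_smallo:
  fixes \<delta> :: "nat \<Rightarrow> real"
  assumes "\<delta> \<in> o(\<lambda>n. real n)"
  shows "(\<lambda>n. real n * \<bar>\<delta> n\<bar> + 2 * (real n * real (Wn n)) + real n * (real c1 + 3) + \<bar>\<delta> n\<bar> + real (Wn n) * 2 + (real c2 + 1))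
     \<in> o(\<lambda>n. real n ^ 2)"
proof -
  have ad: "(\<lambda>n. \<bar>\<delta> n\<bar>) \<in> o(\<lambda>n. real n)" using assms by simp
  have nO: "(\<lambda>n. real n) \<in> O(\<lambda>n. real n ^ 2)" by real_asymp
  have no: "(\<lambda>n. real n) \<in> o(\<lambda>n. real n ^ 2)" by real_asymp
  have one: "(\<lambda>n. 1::real) \<in> o(\<lambda>n. real n ^ 2)" by real_asymp
  have sq: "(\<lambda>n::nat. real n * real n) = (\<lambda>n. real n ^ 2)" by (rule ext) (simp add: power2_eq_square)
  have A0: "(\<lambda>n. \<bar>\<delta> n\<bar> * real n) \<in> o(\<lambda>n. real n * real n)"
    by (rule landau_o.small_big_mult[OF ad]) simp
  have A: "(\<lambda>n. real n * \<bar>\<delta> n\<bar>) \<in> o(\<lambda>n. real n ^ 2)"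
    using A0 unfolding sq by (simp add: mult.commute)
  have B0: "(\<lambda>n. real (Wn n) * real n) \<in> o(\<lambda>n. real n * real n)"
    by (rule landau_o.small_big_mult[OF Wn_smallo]) simp
  have B: "(\<lambda>n. 2 * (real n * real (Wn n))) \<in> o(\<lambda>n. real n ^ 2)"
    using B0 unfolding sq by (simp add: mult.commute)
  have C: "(\<lambda>n. real n * (real c1 + 3)) \<in> o(\<lambda>n. real n ^ 2)"
    using no by simp
  have D: "(\<lambda>n. \<bar>\<delta> n\<bar>) \<in> o(\<lambda>n. real n ^ 2)"
    by (rule landau_o.small_big_trans[OF ad nO])
  have E: "(\<lambda>n. real (Wn n) * 2) \<in> o(\<lambda>n. real n ^ 2)"
    using landau_o.small_big_trans[OF Wn_smallo nO] by simp
  have F: "(\<lambda>n. real c2 + 1) \<in> o(\<lambda>n. real n ^ 2)"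
    using one landau_o.small.cmult_in_iff[of "real c2 + 1" "\<lambda>_. 1::real"] by simp
  show ?thesis
    by (intro sum_in_smallo(1) A B C D E F)
qed

lemma rt_table_Tb: "rt_table n R u = Tb n R u Suc n"
proof -
  have "map (\<lambda>w. w \<in> R u v) [1..<n+1] = map (\<lambda>l. Suc l \<in> R u v) [0..<n]" for v
  proof -
    have "map (\<lambda>l. Suc l \<in> R u v) [0..<n] = map (\<lambda>w. w \<in> R u v) (map Suc [0..<n])" by simp
    also have "map Suc [0..<n] = [1..<n+1]" using map_Suc_upt[of 0 n] by simp
    finally show ?thesis by simp
  qed
  then show ?thesis unfolding rt_table_def Tb_def by simp
qed

lemma port_table_Tb: "port_table n R u m \<pi> = Tb n R u \<pi> m"
  unfolding port_table_def Tb_def by simp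

theorem theorem12:
  fixes U :: "bool list \<Rightarrow> bool list \<Rightarrow> bool list option"
    and \<delta> :: "nat \<Rightarrow> real"
  assumes "universal U"
    and "\<delta> \<in> o(\<lambda>n. real n)"
  shows "\<exists>\<epsilon> \<epsilon>' :: nat \<Rightarrow> real. \<epsilon> \<in> o(\<lambda>n. real n ^ 2) \<and> \<epsilon>' \<in> o(\<lambda>n. real n ^ 3) \<and>
    (\<forall>n G R. random_graph U \<delta> n G \<and> full_info_sp_scheme n G R \<longrightarrow>
       (\<forall>u\<in>{1..n}.
          real (KC U (rt_table n R u) (node_info n G u)) \<ge> real n ^ 2 / 4 - \<epsilon> n \<and>
          (\<forall>\<pi>. bij_betw \<pi> {0..<card (nbrs G u)} (nbrs G u) \<longrightarrow>
             real (KC U (port_table n R u (card (nbrs G u)) \<pi>) (node_info n G u))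
               \<ge> real n ^ 2 / 4 - \<epsilon> n)) \<and>
       (\<Sum>u=1..n. real (KC U (rt_table n R u) (node_info n G u))) \<ge> real n ^ 3 / 4 - \<epsilon>' n)"
proof -
  obtain c1 c2 :: nat where cb:
    "\<And>n G R u \<sigma> m. random_graph U \<delta> n G \<Longrightarrow> full_info_sp_scheme n G R \<Longrightarrow> 1 \<le> u \<Longrightarrow> u \<le> n \<Longrightarrow>
      m \<le> n \<Longrightarrow> (\<forall>l<m. 1 \<le> \<sigma> l \<and> \<sigma> l \<le> n) \<Longrightarrow> (\<forall>w. adj G u w \<longrightarrow> (\<exists>l<m. \<sigma> l = w)) \<Longrightarrow>
      real (KC U (Tb n R u \<sigma> m) (node_info n G u)) \<ge> real n ^ 2 / 4 -
        (real n * \<bar>\<delta> n\<bar> + 2 * (real n * real (Wn n)) + real n * (real c1 + 3) + \<bar>\<delta> n\<bar> + real (Wn n) * 2 + (real c2 + 1))"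
    using core_bound[OF assms(1)] by blast
  define \<beta> where "\<beta> = (\<lambda>n. real n * \<bar>\<delta> n\<bar> + 2 * (real n * real (Wn n)) + real n * (real c1 + 3) + \<bar>\<delta> n\<bar> + real (Wn n) * 2 + (real c2 + 1))"
  have b2: "\<beta> \<in> o(\<lambda>n. real n ^ 2)" unfolding \<beta>_def by (rule beta_smallo[OF assms(2)])
  have b3: "(\<lambda>n. real n * \<beta> n) \<in> o(\<lambda>n. real n ^ 3)"
  proof -
    have "(\<lambda>n. \<beta> n * real n) \<in> o(\<lambda>n. real n ^ 2 * real n)"
      by (rule landau_o.small_big_mult[OF b2]) simp
    moreover have "(\<lambda>n::nat. real n ^ 2 * real n) = (\<lambda>n. real n ^ 3)"
      by (rule ext) (simp add: power2_eq_square power3_eq_cube)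
    ultimately show ?thesis by (simp add: mult.commute)
  qed
  have rt: "real (KC U (rt_table n R u) (node_info n G u)) \<ge> real n ^ 2 / 4 - \<beta> n"
    if h: "random_graph U \<delta> n G" "full_info_sp_scheme n G R" "u \<in> {1..n}" for n G R u
  proof -
    have G: "labeled_graph n G" using h(1) by (simp add: random_graph_def)
    show ?thesis unfolding rt_table_Tb \<beta>_def
    proof (rule cb[OF h(1,2)])
      show "\<forall>w. adj G u w \<longrightarrow> (\<exists>l<n. Suc l = w)"
      proof (intro allI impI)
        fix w assume "adj G u w"
        then have "w \<in> {1..n}" using labeled_adj_range[OF G, of u w] by blast
        then have "1 \<le> w" "w \<le> n" by auto
        then show "\<exists>l<n. Suc l = w" by (intro exI[of _ "w - 1"]) auto
      qed
    qed (use h(3) in auto)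
  qed
  have port: "real (KC U (port_table n R u (card (nbrs G u)) \<pi>) (node_info n G u)) \<ge> real n ^ 2 / 4 - \<beta> n"
    if h: "random_graph U \<delta> n G" "full_info_sp_scheme n G R" "u \<in> {1..n}"
      and \<pi>: "bij_betw \<pi> {0..<card (nbrs G u)} (nbrs G u)" for n G R u \<pi>
  proof -
    have G: "labeled_graph n G" using h(1) by (simp add: random_graph_def)
    have sub: "nbrs G u \<subseteq> {1..n}" using labeled_adj_range[OF G] by (auto simp: nbrs_def)
    have mle: "card (nbrs G u) \<le> n" using card_mono[OF _ sub] by simp
    show ?thesis unfolding port_table_Tb \<beta>_def
    proof (rule cb[OF h(1,2) _ _ mle])
      show "\<forall>l<card (nbrs G u). 1 \<le> \<pi> l \<and> \<pi> l \<le> n"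
        using bij_betw_apply[OF \<pi>] sub by fastforce
      show "\<forall>w. adj G u w \<longrightarrow> (\<exists>l<card (nbrs G u). \<pi> l = w)"
      proof (intro allI impI)
        fix w assume "adj G u w"
        then have "w \<in> \<pi> ` {0..<card (nbrs G u)}" using bij_betw_imp_surj_on[OF \<pi>] by (auto simp: nbrs_def)
        then show "\<exists>l<card (nbrs G u). \<pi> l = w" by auto
      qed
    qed (use h(3) in auto)
  qed
  show ?thesis
  proof (rule exI[of _ \<beta>], rule exI[of _ "\<lambda>n. real n * \<beta> n"], intro conjI b2 b3 allI impI ballI)
    fix n G R u assume h: "random_graph U \<delta> n G \<and> full_info_sp_scheme n G R" "u \<in> {1..n}"
    show "real (KC U (rt_table n R u) (node_info n G u)) \<ge> real n ^ 2 / 4 - \<beta> n"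
      using rt h by blast
  next
    fix n G R u \<pi> assume h: "random_graph U \<delta> n G \<and> full_info_sp_scheme n G R" "u \<in> {1..n}"
      "bij_betw \<pi> {0..<card (nbrs G u)} (nbrs G u)"
    show "real (KC U (port_table n R u (card (nbrs G u)) \<pi>) (node_info n G u)) \<ge> real n ^ 2 / 4 - \<beta> n"
      using port h by blast
  next
    fix n G R assume h: "random_graph U \<delta> n G \<and> full_info_sp_scheme n G R"
    have "(\<Sum>u=1..n. real n ^ 2 / 4 - \<beta> n) \<le> (\<Sum>u=1..n. real (KC U (rt_table n R u) (node_info n G u)))"
      by (rule sum_mono) (use rt h in blast)
    moreover have "(\<Sum>u=1..n. real n ^ 2 / 4 - \<beta> n) = real n ^ 3 / 4 - real n * \<beta> n"
      by (simp add: power2_eq_square power3_eq_cube algebra_simps)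
    ultimately show "(\<Sum>u=1..n. real (KC U (rt_table n R u) (node_info n G u))) \<ge> real n ^ 3 / 4 - real n * \<beta> n"
      by simp
  qed
qed

end
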